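(* Let $A\in\mathbb{C}^{n\times n}$ be written in the core-EP decomposition $A=U\begin{bmatrix}T&S\\0&N\end{bmatrix}U^*$ (as described in the context) and let $m\in\mathbb{N}=\{1,2,\dots\}$. Then $$A^{\#_m}=U\begin{bmatrix}T^{-1}&T^{-(m+1)}\tilde{T}_mP_{N^m}\\0&0\end{bmatrix}U^*,\qquad \tilde{T}_m=\sum_{i=0}^{m-1}T^iSN^{m-1-i}.$$
   Context: Core-EP decomposition: every $A\in\mathbb{C}^{n\times n}$ of index $k$ can be written as $A=U\begin{bmatrix}T&S\\0&N\end{bmatrix}U^*$ with $U$ unitary, $T\in\mathbb{C}^{t\times t}$ nonsingular, $t=\mathrm{rk}(A^k)$, and $N\in\mathbb{C}^{(n-t)\times(n-t)}$ nilpotent of index $k$ (blocks of size zero allowed). Here the index $\mathrm{Ind}(A)$ is the smallest nonnegative integer $k$ with $\mathcal{R}(A^k)=\mathcal{R}(A^{k+1})$, $A^0=I$. For a matrix $B$, $B^\dagger$ is its Moore–Penrose inverse and $P_B=BB^\dagger$. The core-EP inverse $A^{\mathrm{cEP}}$ is the unique $X$ with $XAX=X$ and $\mathcal{R}(X)=\mathcal{R}(X^* )=\mathcal{R}(A^k)$. For $m\in\mathbb{N}$, the $m$-weak group inverse is $A^{\mathrm{WG}_m}:=(A^{\mathrm{cEP}})^{m+1}A^m$ and the $m$-weak core inverse is $A^{\#_m}:=A^{\mathrm{WG}_m}P_{A^m}$. *)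

theory Defs
  imports "Jordan_Normal_Form.Schur_Decomposition" "Jordan_Normal_Form.DL_Rank"
    "Jordan_Normal_Form.Gauss_Jordan_Elimination"
begin

abbreviation adj :: "complex mat \<Rightarrow> complex mat" where
  "adj B \<equiv> mat_adjoint B"

definition unitary_mat :: "nat \<Rightarrow> complex mat \<Rightarrow> bool" where
  "unitary_mat n U \<longleftrightarrow> U \<in> carrier_mat n n \<and> U * adj U = 1\<^sub>m n \<and> adj U * U = 1\<^sub>m n"

definition mat_range :: "complex mat \<Rightarrow> complex vec set" where
  "mat_range B = {B *\<^sub>v x | x. x \<in> carrier_vec (dim_col B)}"

definition crank :: "complex mat \<Rightarrow> nat" where
  "crank B = vec_space.rank (dim_row B) B"

definition mat_index :: "complex mat \<Rightarrow> nat" where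
  "mat_index A = (LEAST k. mat_range (A ^\<^sub>m k) = mat_range (A ^\<^sub>m (k+1)))"

definition nil_index :: "complex mat \<Rightarrow> nat" where
  "nil_index N = (LEAST k. N ^\<^sub>m k = 0\<^sub>m (dim_row N) (dim_col N))"

definition mp_inverse :: "complex mat \<Rightarrow> complex mat" where
  "mp_inverse B = (THE X. X \<in> carrier_mat (dim_col B) (dim_row B) \<and>
      B * X * B = B \<and> X * B * X = X \<and> adj (B * X) = B * X \<and> adj (X * B) = X * B)"

definition proj_range :: "complex mat \<Rightarrow> complex mat" where
  "proj_range B = B * mp_inverse B"

definition core_ep_inverse :: "complex mat \<Rightarrow> complex mat" where
  "core_ep_inverse A = (THE X. X \<in> carrier_mat (dim_row A) (dim_row A) \<and> X * A * X = X \<and>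
      mat_range X = mat_range (A ^\<^sub>m mat_index A) \<and>
      mat_range (adj X) = mat_range (A ^\<^sub>m mat_index A))"

definition m_weak_group_inverse :: "nat \<Rightarrow> complex mat \<Rightarrow> complex mat" where
  "m_weak_group_inverse m A = (core_ep_inverse A) ^\<^sub>m (m+1) * A ^\<^sub>m m"

definition m_weak_core_inverse :: "nat \<Rightarrow> complex mat \<Rightarrow> complex mat" where
  "m_weak_core_inverse m A = m_weak_group_inverse m A * proj_range (A ^\<^sub>m m)"

definition inv_mat :: "complex mat \<Rightarrow> complex mat" where
  "inv_mat T = the (mat_inverse T)"

definition mat_sum :: "nat \<Rightarrow> nat \<Rightarrow> (nat \<Rightarrow> complex mat) \<Rightarrow> nat list \<Rightarrow> complex mat" where
  "mat_sum r c f xs = foldr (\<lambda>i acc. f i + acc) xs (0\<^sub>m r c)"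

end

theory Submission
  imports Defs
begin

lemma adj_dims[simp]: "dim_row (adj A) = dim_col A" "dim_col (adj A) = dim_row A"
  unfolding mat_adjoint_def by auto

lemma adj_carrier[simp]: assumes "A \<in> carrier_mat n m" shows "adj A \<in> carrier_mat m n"
proof (rule carrier_matI)
  show "dim_row (adj A) = m" using assms by simp
  show "dim_col (adj A) = n" using assms by simp
qed

lemma adj_index[simp]: "i < dim_col A \<Longrightarrow> j < dim_row A \<Longrightarrow> adj A $$ (i,j) = cnj (A $$ (j,i))"
  unfolding mat_adjoint_def by (subst mat_of_rows_index, simp, simp, simp)

lemma adj_adj[simp]: "adj (adj A) = A"
  by (rule eq_matI, auto)

lemma adj_mult: assumes A: "A \<in> carrier_mat n m" and B: "B \<in> carrier_mat m p"
  shows "adj (A * B) = adj B * adj A"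
proof (rule eq_matI)
  fix i j assume ij: "i < dim_row (adj B * adj A)" "j < dim_col (adj B * adj A)"
  hence i: "i < p" and j: "j < n" using A B by auto
  have "adj (A * B) $$ (i, j) = cnj ((A * B) $$ (j, i))" using i j A B by simp
  also have "\<dots> = cnj (\<Sum>l<m. A $$ (j,l) * B $$ (l,i))"
    using i j A B by (simp add: scalar_prod_def lessThan_atLeast0)
  also have "\<dots> = (\<Sum>l<m. cnj (B $$ (l,i)) * cnj (A $$ (j,l)))"
    by (simp add: cnj_sum mult.commute)
  also have "\<dots> = (adj B * adj A) $$ (i, j)"
    using i j A B by (simp add: scalar_prod_def lessThan_atLeast0)
  finally show "adj (A * B) $$ (i, j) = (adj B * adj A) $$ (i, j)" .
qed (insert A B, auto)

lemma adj_add: assumes "A \<in> carrier_mat n m" "B \<in> carrier_mat n m"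
  shows "adj (A + B) = adj A + adj B"
  by (rule eq_matI, insert assms, auto)

lemma adj_minus: assumes "A \<in> carrier_mat n m" "B \<in> carrier_mat n m"
  shows "adj (A - B) = adj A - adj B"
  by (rule eq_matI, insert assms, auto)

lemma adj_uminus: "adj (- A) = - adj A"
  by (rule eq_matI, auto)

lemma adj_zero[simp]: "adj (0\<^sub>m n m) = 0\<^sub>m m n"
  by (rule eq_matI, auto)

lemma adj_one[simp]: "adj (1\<^sub>m n) = 1\<^sub>m n"
  by (rule eq_matI, auto)

lemma adj_four_block: assumes "A \<in> carrier_mat n1 m1" "B \<in> carrier_mat n1 m2"
  "C \<in> carrier_mat n2 m1" "D \<in> carrier_mat n2 m2"
  shows "adj (four_block_mat A B C D) = four_block_mat (adj A) (adj C) (adj B) (adj D)"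
  apply (rule eq_matI)
  using assms by (auto simp: four_block_mat_def)

lemma mat_sum_carrier: "(\<And>i. i \<in> set xs \<Longrightarrow> f i \<in> carrier_mat r c) \<Longrightarrow> mat_sum r c f xs \<in> carrier_mat r c"
  unfolding mat_sum_def by (induct xs, auto)

lemma mat_sum_foldr: assumes "\<And>i. i \<in> set xs \<Longrightarrow> f i \<in> carrier_mat r c" and B: "B \<in> carrier_mat r c"
  shows "foldr (\<lambda>i acc. f i + acc) xs B = mat_sum r c f xs + B"
  using assms(1)
proof (induct xs)
  case Nil
  then show ?case using B unfolding mat_sum_def by simp
next
  case (Cons x xs)
  have fx: "f x \<in> carrier_mat r c" using Cons by simp
  have ms: "mat_sum r c f xs \<in> carrier_mat r c" by (rule mat_sum_carrier, insert Cons, auto)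
  have "foldr (\<lambda>i acc. f i + acc) (x # xs) B = f x + (mat_sum r c f xs + B)" using Cons by simp
  also have "\<dots> = (f x + mat_sum r c f xs) + B" using fx ms B by (simp add: assoc_add_mat)
  also have "f x + mat_sum r c f xs = mat_sum r c f (x # xs)"
    unfolding mat_sum_def by simp
  finally show ?case .
qed

lemma mat_sum_Suc: assumes "\<And>i. i \<le> j \<Longrightarrow> f i \<in> carrier_mat r c"
  shows "mat_sum r c f [0..<Suc j] = mat_sum r c f [0..<j] + f j"
proof -
  have "mat_sum r c f [0..<Suc j] = foldr (\<lambda>i acc. f i + acc) [0..<j] (f j + 0\<^sub>m r c)"
    unfolding mat_sum_def by simp
  also have "f j + 0\<^sub>m r c = f j" using assms[of j] by simp
  also have "foldr (\<lambda>i acc. f i + acc) [0..<j] (f j) = mat_sum r c f [0..<j] + f j"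
    by (rule mat_sum_foldr, insert assms, auto)
  finally show ?thesis .
qed

lemma mat_sum_cong: "(\<And>i. i \<in> set xs \<Longrightarrow> f i = g i) \<Longrightarrow> mat_sum r c f xs = mat_sum r c g xs"
  unfolding mat_sum_def by (induct xs, auto)

lemma mat_sum_mult_right: assumes "\<And>i. i \<in> set xs \<Longrightarrow> f i \<in> carrier_mat r c" and N: "N \<in> carrier_mat c d"
  shows "mat_sum r c f xs * N = mat_sum r d (\<lambda>i. f i * N) xs"
  using assms(1)
proof (induct xs)
  case Nil
  then show ?case using N unfolding mat_sum_def by simp
next
  case (Cons x xs)
  have fx: "f x \<in> carrier_mat r c" using Cons by simp
  have ms: "mat_sum r c f xs \<in> carrier_mat r c" by (rule mat_sum_carrier, insert Cons, auto)
  have "mat_sum r c f (x # xs) * N = (f x + mat_sum r c f xs) * N" unfolding mat_sum_def by simp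
  also have "\<dots> = f x * N + mat_sum r c f xs * N" using fx ms N by (simp add: add_mult_distrib_mat)
  also have "mat_sum r c f xs * N = mat_sum r d (\<lambda>i. f i * N) xs" using Cons by simp
  finally show ?case unfolding mat_sum_def by simp
qed

section \<open>conjugation by a unitary\<close>

lemma unitaryD: assumes "unitary_mat n U"
  shows "U \<in> carrier_mat n n" "adj U \<in> carrier_mat n n" "U * adj U = 1\<^sub>m n" "adj U * U = 1\<^sub>m n"
  using assms unfolding unitary_mat_def by auto

lemma conj_mult: assumes U: "unitary_mat n U" and X: "X \<in> carrier_mat n n" and Y: "Y \<in> carrier_mat n n"
  shows "(U * X * adj U) * (U * Y * adj U) = U * (X * Y) * adj U"
proof -
  note u = unitaryD[OF U]
  have cUX: "U * X \<in> carrier_mat n n" using u X by simp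
  have cUY: "U * Y \<in> carrier_mat n n" using u Y by simp
  have cYV: "Y * adj U \<in> carrier_mat n n" using u Y by simp
  have cUYV: "U * Y * adj U \<in> carrier_mat n n" using u Y by (blast intro: mult_carrier_mat)
  have "(U * X * adj U) * (U * Y * adj U) = (U * X) * (adj U * (U * Y * adj U))"
    by (rule assoc_mult_mat[OF cUX u(2) cUYV])
  also have "\<dots> = (U * X) * (adj U * (U * (Y * adj U)))" using assoc_mult_mat[OF u(1) Y u(2)] by simp
  also have "\<dots> = (U * X) * ((adj U * U) * (Y * adj U))"
    using assoc_mult_mat[OF u(2) u(1) cYV] by simp
  also have "\<dots> = (U * X) * (Y * adj U)" using u cYV by (simp add: left_mult_one_mat)
  also have "\<dots> = ((U * X) * Y) * adj U"
    by (rule assoc_mult_mat[symmetric, OF cUX Y u(2)])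
  also have "\<dots> = U * (X * Y) * adj U" using assoc_mult_mat[OF u(1) X Y] by simp
  finally show ?thesis .
qed

lemma conj_pow: assumes U: "unitary_mat n U" and X: "X \<in> carrier_mat n n"
  shows "(U * X * adj U) ^\<^sub>m j = U * (X ^\<^sub>m j) * adj U"
proof (induct j)
  case 0
  note u = unitaryD[OF U]
  have "U * (X ^\<^sub>m 0) * adj U = U * adj U" using u X by simp
  then show ?case using u by simp
next
  case (Suc j)
  have "(U * X * adj U) ^\<^sub>m Suc j = (U * (X ^\<^sub>m j) * adj U) * (U * X * adj U)" using Suc by simp
  also have "\<dots> = U * (X ^\<^sub>m j * X) * adj U" by (rule conj_mult[OF U], insert X, auto)
  finally show ?case by simp
qed

lemma conj_adj: assumes U: "unitary_mat n U" and X: "X \<in> carrier_mat n n"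
  shows "adj (U * X * adj U) = U * adj X * adj U"
proof -
  note u = unitaryD[OF U]
  have "adj (U * X * adj U) = adj (adj U) * adj (U * X)"
    by (rule adj_mult, insert u X, auto)
  also have "adj (U * X) = adj X * adj U" by (rule adj_mult, insert u X, auto)
  also have "adj (adj U) * (adj X * adj U) = U * adj X * adj U"
    using u X by (simp, intro assoc_mult_mat[symmetric], auto)
  finally show ?thesis .
qed

lemma conj_cancel: assumes U: "unitary_mat n U" and X: "X \<in> carrier_mat n n"
  shows "adj U * (U * X * adj U) * U = X"
proof -
  note u = unitaryD[OF U]
  have cUX: "U * X \<in> carrier_mat n n" using u X by simp
  have cUXV: "U * X * adj U \<in> carrier_mat n n" using u X by (blast intro: mult_carrier_mat)
  have "adj U * (U * X * adj U) * U = adj U * ((U * X * adj U) * U)"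
    by (rule assoc_mult_mat[OF u(2) cUXV u(1)])
  also have "\<dots> = adj U * ((U * X) * (adj U * U))"
    using assoc_mult_mat[OF cUX u(2) u(1)] by simp
  also have "\<dots> = adj U * (U * X)" using u cUX by (simp add: right_mult_one_mat)
  also have "\<dots> = (adj U * U) * X" by (rule assoc_mult_mat[symmetric, OF u(2) u(1) X])
  also have "\<dots> = X" using u X by (simp add: left_mult_one_mat)
  finally show ?thesis .
qed

lemma block_diag_pow: assumes X: "X \<in> carrier_mat a a"
  shows "(four_block_mat X (0\<^sub>m a b) (0\<^sub>m b a) (0\<^sub>m b b)) ^\<^sub>m Suc j
     = four_block_mat (X ^\<^sub>m Suc j) (0\<^sub>m a b) (0\<^sub>m b a) (0\<^sub>m b b)"
proof (induct j)
  case 0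
  have "dim_row (four_block_mat X (0\<^sub>m a b) (0\<^sub>m b a) (0\<^sub>m b b)) = a + b" using X by simp
  then show ?case using X by simp
next
  case (Suc j)
  have "(four_block_mat X (0\<^sub>m a b) (0\<^sub>m b a) (0\<^sub>m b b)) ^\<^sub>m Suc (Suc j) =
    four_block_mat (X ^\<^sub>m Suc j) (0\<^sub>m a b) (0\<^sub>m b a) (0\<^sub>m b b) * four_block_mat X (0\<^sub>m a b) (0\<^sub>m b a) (0\<^sub>m b b)"
    using Suc by simp
  also have "\<dots> = four_block_mat (X ^\<^sub>m Suc j * X + 0\<^sub>m a b * 0\<^sub>m b a) (X ^\<^sub>m Suc j * 0\<^sub>m a b + 0\<^sub>m a b * 0\<^sub>m b b)
     (0\<^sub>m b a * X + 0\<^sub>m b b * 0\<^sub>m b a) (0\<^sub>m b a * 0\<^sub>m a b + 0\<^sub>m b b * 0\<^sub>m b b)"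
    by (rule mult_four_block_mat, insert X, auto)
  also have "\<dots> = four_block_mat (X ^\<^sub>m Suc (Suc j)) (0\<^sub>m a b) (0\<^sub>m b a) (0\<^sub>m b b)"
  proof -
    have c: "X ^\<^sub>m j * X * X \<in> carrier_mat a a" using X by (intro carrier_matI, auto simp: pow_mat_dim_square[OF X])
    show ?thesis using X c by simp
  qed
  finally show ?case .
qed

section \<open>ranges\<close>

lemma range_mult_sub: assumes X: "X \<in> carrier_mat n p" and Y: "Y \<in> carrier_mat p q"
  shows "mat_range (X * Y) \<subseteq> mat_range X"
proof
  fix v assume "v \<in> mat_range (X * Y)"
  then obtain x where x: "x \<in> carrier_vec q" and v: "v = (X * Y) *\<^sub>v x"
    unfolding mat_range_def using Y by auto
  have "v = X *\<^sub>v (Y *\<^sub>v x)" using v X Y x by (simp add: assoc_mult_mat_vec)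
  moreover have "Y *\<^sub>v x \<in> carrier_vec (dim_col X)" using X Y x by simp
  ultimately show "v \<in> mat_range X" unfolding mat_range_def by blast
qed

lemma range_eqI: assumes X: "X \<in> carrier_mat n p" and Y: "Y \<in> carrier_mat n q"
  and Z1: "Z1 \<in> carrier_mat q p" and Z2: "Z2 \<in> carrier_mat p q"
  and e1: "X = Y * Z1" and e2: "Y = X * Z2"
  shows "mat_range X = mat_range Y"
proof
  show "mat_range X \<subseteq> mat_range Y" using range_mult_sub[OF Y Z1] unfolding e1[symmetric] .
  show "mat_range Y \<subseteq> mat_range X" using range_mult_sub[OF X Z2] unfolding e2[symmetric] .
qed

lemma col_in_range: assumes X: "X \<in> carrier_mat n p" and j: "j < p"
  shows "col X j \<in> mat_range X"
proof -
  have "col X j = X *\<^sub>v unit_vec p j"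
    by (rule eq_vecI, insert X j, auto simp: scalar_prod_right_unit)
  moreover have "unit_vec p j \<in> carrier_vec (dim_col X)" using X by simp
  ultimately show ?thesis unfolding mat_range_def by blast
qed

lemma range_factor: assumes X: "X \<in> carrier_mat n p" and Y: "Y \<in> carrier_mat n q"
  and sub: "mat_range X \<subseteq> mat_range Y"
  shows "\<exists>W \<in> carrier_mat q p. X = Y * W"
proof -
  have "\<forall>j. \<exists>w. j < p \<longrightarrow> w \<in> carrier_vec q \<and> col X j = Y *\<^sub>v w"
  proof (intro allI)
    fix j
    show "\<exists>w. j < p \<longrightarrow> w \<in> carrier_vec q \<and> col X j = Y *\<^sub>v w"
    proof (cases "j < p")
      case True
      with col_in_range[OF X] sub have "col X j \<in> mat_range Y" by auto
      then show ?thesis unfolding mat_range_def using Y by auto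
    qed auto
  qed
  then obtain w where w: "\<And>j. j < p \<Longrightarrow> w j \<in> carrier_vec q \<and> col X j = Y *\<^sub>v w j"
    by metis
  define W where "W = mat q p (\<lambda>(i,j). w j $ i)"
  have W: "W \<in> carrier_mat q p" unfolding W_def by simp
  have "X = Y * W"
  proof (rule eq_matI)
    fix i j assume i: "i < dim_row (Y * W)" and j: "j < dim_col (Y * W)"
    hence i': "i < n" and j': "j < p" using Y W by auto
    have cW: "col W j = w j" using w[OF j'] j' unfolding W_def by (auto intro!: eq_vecI)
    have "(Y * W) $$ (i, j) = (Y *\<^sub>v col W j) $ i" using i' j' Y W by simp
    also have "\<dots> = col X j $ i" using w[OF j'] cW by simp
    also have "\<dots> = X $$ (i,j)" using i' j' X by simp
    finally show "X $$ (i, j) = (Y * W) $$ (i, j)" by simp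
  qed (insert X Y W, auto)
  with W show ?thesis by blast
qed

lemma four_block_eqD: assumes e: "four_block_mat A B C D = four_block_mat A' B' C' D'"
  and c: "A \<in> carrier_mat n1 m1" "B \<in> carrier_mat n1 m2" "C \<in> carrier_mat n2 m1" "D \<in> carrier_mat n2 m2"
  and c': "A' \<in> carrier_mat n1 m1" "B' \<in> carrier_mat n1 m2" "C' \<in> carrier_mat n2 m1" "D' \<in> carrier_mat n2 m2"
  shows "A = A' \<and> B = B' \<and> C = C' \<and> D = D'"
proof (intro conjI)
  let ?M = "four_block_mat A B C D" and ?M' = "four_block_mat A' B' C' D'"
  show "A = A'"
  proof (rule eq_matI)
    fix i j assume "i < dim_row A'" "j < dim_col A'"
    hence ij: "i < n1" "j < m1" using c' by auto
    have "A $$ (i,j) = ?M $$ (i,j)" using c ij by (simp add: index_mat_four_block)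
    also have "\<dots> = ?M' $$ (i,j)" using e by simp
    also have "\<dots> = A' $$ (i,j)" using c' ij by (simp add: index_mat_four_block)
    finally show "A $$ (i,j) = A' $$ (i,j)" .
  qed (insert c c', auto)
  show "B = B'"
  proof (rule eq_matI)
    fix i j assume "i < dim_row B'" "j < dim_col B'"
    hence ij: "i < n1" "j < m2" using c' by auto
    have "B $$ (i,j) = ?M $$ (i,j + m1)" using c ij by (simp add: index_mat_four_block)
    also have "\<dots> = ?M' $$ (i,j + m1)" using e by simp
    also have "\<dots> = B' $$ (i,j)" using c' ij by (simp add: index_mat_four_block)
    finally show "B $$ (i,j) = B' $$ (i,j)" .
  qed (insert c c', auto)
  show "C = C'"
  proof (rule eq_matI)
    fix i j assume "i < dim_row C'" "j < dim_col C'"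
    hence ij: "i < n2" "j < m1" using c' by auto
    have "C $$ (i,j) = ?M $$ (i + n1,j)" using c ij by (simp add: index_mat_four_block)
    also have "\<dots> = ?M' $$ (i + n1,j)" using e by simp
    also have "\<dots> = C' $$ (i,j)" using c' ij by (simp add: index_mat_four_block)
    finally show "C $$ (i,j) = C' $$ (i,j)" .
  qed (insert c c', auto)
  show "D = D'"
  proof (rule eq_matI)
    fix i j assume "i < dim_row D'" "j < dim_col D'"
    hence ij: "i < n2" "j < m2" using c' by auto
    have "D $$ (i,j) = ?M $$ (i + n1,j + m1)" using c ij by (simp add: index_mat_four_block)
    also have "\<dots> = ?M' $$ (i + n1,j + m1)" using e by simp
    also have "\<dots> = D' $$ (i,j)" using c' ij by (simp add: index_mat_four_block)
    finally show "D $$ (i,j) = D' $$ (i,j)" .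
  qed (insert c c', auto)
qed

lemma inv_matD: assumes T: "T \<in> carrier_mat t t" and iT: "invertible_mat T"
  shows "inv_mat T \<in> carrier_mat t t" "T * inv_mat T = 1\<^sub>m t" "inv_mat T * T = 1\<^sub>m t"
proof -
  from iT obtain B where B: "inverts_mat T B" "inverts_mat B T" unfolding invertible_mat_def by blast
  have TB: "T * B = 1\<^sub>m t" using B T unfolding inverts_mat_def by simp
  have Bc: "B \<in> carrier_mat t t"
  proof (rule carrier_matI)
    show "dim_col B = t" using arg_cong[OF TB, of dim_col] by simp
    have "B * T = 1\<^sub>m (dim_row B)" using B unfolding inverts_mat_def by simp
    from arg_cong[OF this, of dim_col] show "dim_row B = t" using T by simp
  qed
  have BT: "B * T = 1\<^sub>m t" using B Bc unfolding inverts_mat_def by simp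
  have U: "T \<in> Units (ring_mat TYPE(complex) t ())"
    using T Bc TB BT unfolding Units_def ring_mat_def by auto
  obtain C where C: "mat_inverse T = Some C"
    using mat_inverse(1)[OF T, of "()"] U by (cases "mat_inverse T", auto)
  from mat_inverse(2)[OF T C] C show "inv_mat T \<in> carrier_mat t t" "T * inv_mat T = 1\<^sub>m t" "inv_mat T * T = 1\<^sub>m t"
    unfolding inv_mat_def by auto
qed

lemma assoc_dim: "dim_col A = dim_row B \<Longrightarrow> dim_col B = dim_row C \<Longrightarrow> A * B * C = A * (B * C)"
  by (rule assoc_mult_mat[of A "dim_row A" "dim_col A" B "dim_col B" C "dim_col C"], auto intro: carrier_matI)

lemma mult_in_carrier[simp]: "(A * B \<in> carrier_mat a b) = (dim_row A = a \<and> dim_col B = b)"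
proof
  assume "A * B \<in> carrier_mat a b" thus "dim_row A = a \<and> dim_col B = b" by (auto dest: carrier_matD)
qed (auto intro: carrier_matI)

lemma adj_in_carrier[simp]: "(adj A \<in> carrier_mat a b) = (dim_col A = a \<and> dim_row A = b)"
proof
  assume "adj A \<in> carrier_mat a b" thus "dim_col A = a \<and> dim_row A = b" by (auto dest: carrier_matD)
qed (auto intro: carrier_matI)

lemmas msimps = assoc_dim right_mult_one_mat' left_mult_one_mat' carrier_matD

lemma cancel_left: fixes B C X :: "complex mat" assumes e: "B * C = 1\<^sub>m k" and d: "dim_col B = dim_row C" and X: "dim_row X = k"
  shows "B * (C * X) = X"
proof -
  have "dim_col C = k" using arg_cong[OF e, of dim_col] by simp
  hence "B * (C * X) = (B * C) * X" using d X by (simp add: assoc_dim)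
  also have "\<dots> = X" unfolding e by (rule left_mult_one_mat'[OF X])
  finally show ?thesis .
qed

definition is_mp :: "complex mat \<Rightarrow> complex mat \<Rightarrow> bool" where
  "is_mp B X \<longleftrightarrow> X \<in> carrier_mat (dim_col B) (dim_row B) \<and>
      B * X * B = B \<and> X * B * X = X \<and> adj (B * X) = B * X \<and> adj (X * B) = X * B"

lemma mp_unique: assumes B: "B \<in> carrier_mat n p" and X: "is_mp B X" and Y: "is_mp B Y"
  shows "X = Y"
proof -
  have Xc: "X \<in> carrier_mat p n" and Yc: "Y \<in> carrier_mat p n" using X Y B unfolding is_mp_def by auto
  have X1: "B * X * B = B" "X * B * X = X" "adj (B * X) = B * X" "adj (X * B) = X * B" using X unfolding is_mp_def by auto
  have Y1: "B * Y * B = B" "Y * B * Y = Y" "adj (B * Y) = B * Y" "adj (Y * B) = Y * B" using Y unfolding is_mp_def by auto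
  have BXc: "B * X \<in> carrier_mat n n" "B * Y \<in> carrier_mat n n" using B Xc Yc by auto
  have XBc: "X * B \<in> carrier_mat p p" "Y * B \<in> carrier_mat p p" using B Xc Yc by auto
  have BX: "B * X = B * Y"
  proof -
    have "B * X = (B * Y * B) * X" using Y1 by simp
    also have "\<dots> = (B * Y) * (B * X)" using B Xc Yc by (simp add: msimps)
    also have "\<dots> = adj (B * Y) * adj (B * X)" using X1 Y1 by simp
    also have "\<dots> = adj ((B * X) * (B * Y))" by (rule adj_mult[symmetric, OF BXc(1) BXc(2)])
    also have "(B * X) * (B * Y) = (B * X * B) * Y" using B Xc Yc by (simp add: msimps)
    also have "\<dots> = B * Y" using X1 by simp
    finally show ?thesis using Y1 by simp
  qed
  have XB: "X * B = Y * B"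
  proof -
    have "X * B = X * (B * Y * B)" using Y1 by simp
    also have "\<dots> = (X * B) * (Y * B)" using B Xc Yc by (simp add: msimps)
    also have "\<dots> = adj (X * B) * adj (Y * B)" using X1 Y1 by simp
    also have "\<dots> = adj ((Y * B) * (X * B))" by (rule adj_mult[symmetric, OF XBc(2) XBc(1)])
    also have "(Y * B) * (X * B) = Y * (B * X * B)" using B Xc Yc by (simp add: msimps)
    also have "\<dots> = Y * B" using X1 by simp
    finally show ?thesis using Y1 by simp
  qed
  have "X = X * B * X" using X1 by simp
  also have "\<dots> = Y * B * X" using XB by simp
  also have "\<dots> = Y * (B * X)" using B Xc Yc by (simp add: msimps)
  also have "\<dots> = Y * (B * Y)" using BX by simp
  also have "\<dots> = Y * B * Y" using B Xc Yc by (simp add: msimps)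
  also have "\<dots> = Y" using Y1 by simp
  finally show ?thesis .
qed

lemma mp_inverse_eq: assumes B: "B \<in> carrier_mat n p" and X: "is_mp B X"
  shows "mp_inverse B = X"
  unfolding mp_inverse_def
proof (rule the_equality)
  show "X \<in> carrier_mat (dim_col B) (dim_row B) \<and> B * X * B = B \<and> X * B * X = X \<and> adj (B * X) = B * X \<and> adj (X * B) = X * B"
    using X unfolding is_mp_def by auto
  fix Y assume "Y \<in> carrier_mat (dim_col B) (dim_row B) \<and> B * Y * B = B \<and> Y * B * Y = Y \<and> adj (B * Y) = B * Y \<and> adj (Y * B) = Y * B"
  hence "is_mp B Y" unfolding is_mp_def by auto
  from mp_unique[OF B this X] show "Y = X" .
qed

lemma adj_dot: assumes H: "H \<in> carrier_mat n r" and v: "v \<in> carrier_vec r" and w: "w \<in> carrier_vec n"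
  shows "(H *\<^sub>v v) \<bullet>c w = v \<bullet>c (adj H *\<^sub>v w)"
proof -
  have "(H *\<^sub>v v) \<bullet>c w = (\<Sum>i<n. (\<Sum>j<r. H $$ (i,j) * v $ j) * cnj (w $ i))"
    using H v w by (simp add: scalar_prod_def lessThan_atLeast0)
  also have "\<dots> = (\<Sum>i<n. \<Sum>j<r. H $$ (i,j) * v $ j * cnj (w $ i))"
    by (simp add: sum_distrib_right)
  also have "\<dots> = (\<Sum>j<r. \<Sum>i<n. H $$ (i,j) * v $ j * cnj (w $ i))"
    by (rule sum.swap)
  also have "\<dots> = (\<Sum>j<r. v $ j * cnj (\<Sum>i<n. cnj (H $$ (i,j)) * w $ i))"
    by (simp add: cnj_sum sum_distrib_left mult_ac)
  also have "\<dots> = v \<bullet>c (adj H *\<^sub>v w)"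
    using H v w by (simp add: scalar_prod_def lessThan_atLeast0)
  finally show ?thesis .
qed

lemma gram_invertible: assumes H: "H \<in> carrier_mat n r" and L: "L \<in> carrier_mat r n" and LH: "L * H = 1\<^sub>m r"
  shows "\<exists>M \<in> carrier_mat r r. (adj H * H) * M = 1\<^sub>m r \<and> M * (adj H * H) = 1\<^sub>m r"
proof -
  have P: "adj H * H \<in> carrier_mat r r" using H by simp
  have "det (adj H * H) \<noteq> 0"
  proof
    assume "det (adj H * H) = 0"
    from this[unfolded det_0_iff_vec_prod_zero_field[OF P]] obtain v where
      v: "v \<in> carrier_vec r" "v \<noteq> 0\<^sub>v r" "(adj H * H) *\<^sub>v v = 0\<^sub>v r" by blast
    let ?w = "H *\<^sub>v v"
    have w: "?w \<in> carrier_vec n" using H v by simp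
    have "adj H *\<^sub>v ?w = 0\<^sub>v r" using v(3) assoc_mult_mat_vec[OF adj_carrier[OF H] H v(1)] by simp
    hence "?w \<bullet>c ?w = 0" using adj_dot[OF H v(1) w] v by simp
    hence w0: "?w = 0\<^sub>v n" using conjugate_square_eq_0_vec[OF w] by simp
    have "v = (L * H) *\<^sub>v v" using LH v by simp
    also have "\<dots> = L *\<^sub>v ?w" by (rule assoc_mult_mat_vec[OF L H v(1)])
    also have "\<dots> = 0\<^sub>v r" unfolding w0 using L by (intro eq_vecI, auto simp: scalar_prod_def)
    finally show False using v by simp
  qed
  from det_non_zero_imp_unit[OF P this, unfolded Units_def, of "()"]
  obtain M where "M \<in> carrier_mat r r" "M * (adj H * H) = 1\<^sub>m r" "(adj H * H) * M = 1\<^sub>m r"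
    by (auto simp: ring_mat_def)
  thus ?thesis by blast
qed

lemma adj_inverse_hermitian: assumes P: "P \<in> carrier_mat r r" and M: "M \<in> carrier_mat r r"
  and PM: "P * M = 1\<^sub>m r" and MP: "M * P = 1\<^sub>m r" and h: "adj P = P"
  shows "adj M = M"
proof -
  have "adj M * P = 1\<^sub>m r"
  proof -
    have "adj M * P = adj M * adj P" using h by simp
    also have "\<dots> = adj (P * M)" by (rule adj_mult[symmetric, OF P M])
    finally show ?thesis using PM by simp
  qed
  have "adj M = adj M * (P * M)" using PM M by (simp add: right_mult_one_mat)
  also have "\<dots> = (adj M * P) * M" using M P by (simp add: msimps)
  also have "\<dots> = M" using \<open>adj M * P = 1\<^sub>m r\<close> M by (simp add: left_mult_one_mat)
  finally show ?thesis .
qed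

lemma mp_exists_factor: assumes F: "F \<in> carrier_mat n r" and G: "G \<in> carrier_mat r p"
  and L: "L \<in> carrier_mat r n" and E: "E \<in> carrier_mat p r"
  and LF: "L * F = 1\<^sub>m r" and GE: "G * E = 1\<^sub>m r"
  shows "\<exists>X. is_mp (F * G) X"
proof -
  obtain M1 where M1: "M1 \<in> carrier_mat r r" "(adj F * F) * M1 = 1\<^sub>m r" "M1 * (adj F * F) = 1\<^sub>m r"
    using gram_invertible[OF F L LF] by blast
  have aG: "adj G \<in> carrier_mat p r" using G by simp
  have aE: "adj E \<in> carrier_mat r p" using E by simp
  have EG: "adj E * adj G = 1\<^sub>m r" using adj_mult[OF G E, symmetric] GE by simp
  obtain M2 where M2: "M2 \<in> carrier_mat r r" "(adj (adj G) * adj G) * M2 = 1\<^sub>m r" "M2 * (adj (adj G) * adj G) = 1\<^sub>m r"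
    using gram_invertible[OF aG aE EG] by blast
  have M2': "(G * adj G) * M2 = 1\<^sub>m r" "M2 * (G * adj G) = 1\<^sub>m r" using M2 by auto
  have h1: "adj (adj F * F) = adj F * F" using adj_mult[OF adj_carrier[OF F] F] by simp
  have h2: "adj (G * adj G) = G * adj G" using adj_mult[OF G aG] by simp
  have aM1: "adj M1 = M1" by (rule adj_inverse_hermitian[OF _ M1(1) M1(2) M1(3) h1], insert F, simp)
  have aM2: "adj M2 = M2" by (rule adj_inverse_hermitian[OF _ M2(1) M2' h2], insert G, simp)
  define X where "X = adj G * M2 * M1 * adj F"
  define B where "B = F * G"
  have Xc: "X \<in> carrier_mat p n" unfolding X_def using F G M1 M2 by simp
  have BX: "B * X = F * (M1 * adj F)"
  proof -
    have "B * X = F * ((G * adj G) * (M2 * (M1 * adj F)))" unfolding B_def X_def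
      using F G M1 M2 by (simp add: msimps)
    also have "(G * adj G) * (M2 * (M1 * adj F)) = M1 * adj F"
      by (rule cancel_left[OF M2'(1)], insert G M1 M2 F, auto)
    finally show ?thesis .
  qed
  have XB: "X * B = adj G * (M2 * G)"
  proof -
    have "X * B = adj G * (M2 * (M1 * ((adj F * F) * G)))" unfolding B_def X_def
      using F G M1 M2 by (simp add: msimps)
    also have "M1 * ((adj F * F) * G) = G"
      by (rule cancel_left[OF M1(3)], insert G M1 F, auto)
    finally show ?thesis .
  qed
  have "is_mp B X" unfolding is_mp_def
  proof (intro conjI)
    show "X \<in> carrier_mat (dim_col B) (dim_row B)" using Xc F G unfolding B_def by simp
    show "B * X * B = B"
    proof -
      have "B * X * B = F * (M1 * ((adj F * F) * G))" unfolding BX unfolding B_def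
        using F G M1 by (simp add: msimps)
      also have "M1 * ((adj F * F) * G) = G"
        by (rule cancel_left[OF M1(3)], insert G M1 F, auto)
      finally show ?thesis unfolding B_def .
    qed
    show "X * B * X = X"
    proof -
      have "X * B * X = adj G * (M2 * ((G * adj G) * (M2 * (M1 * adj F))))" unfolding XB unfolding X_def
        using F G M1 M2 by (simp add: msimps)
      also have "(G * adj G) * (M2 * (M1 * adj F)) = M1 * adj F"
        by (rule cancel_left[OF M2'(1)], insert G M1 M2 F, auto)
      also have "adj G * (M2 * (M1 * adj F)) = X" unfolding X_def using F G M1 M2 by (simp add: msimps)
      finally show ?thesis .
    qed
    show "adj (B * X) = B * X"
    proof -
      have "adj (F * (M1 * adj F)) = adj (M1 * adj F) * adj F" by (rule adj_mult[OF F], insert M1 F, auto)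
      also have "adj (M1 * adj F) = adj (adj F) * adj M1" by (rule adj_mult[OF M1(1)], insert F, auto)
      finally show ?thesis unfolding BX aM1 adj_adj using F M1 by (simp add: msimps)
    qed
    show "adj (X * B) = X * B"
    proof -
      have "adj (adj G * (M2 * G)) = adj (M2 * G) * adj (adj G)" by (rule adj_mult[OF aG], insert M2 G, auto)
      also have "adj (M2 * G) = adj G * adj M2" by (rule adj_mult[OF M2(1) G])
      finally show ?thesis unfolding XB aM2 adj_adj using G M2 by (simp add: msimps)
    qed
  qed
  thus ?thesis unfolding B_def by blast
qed

lemma full_rank_factorization: fixes B :: "complex mat" assumes B: "B \<in> carrier_mat n p"
  shows "\<exists>r F G L E. F \<in> carrier_mat n r \<and> G \<in> carrier_mat r p \<and> L \<in> carrier_mat r n \<and> E \<in> carrier_mat p r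
     \<and> L * F = 1\<^sub>m r \<and> G * E = 1\<^sub>m r \<and> B = F * G"
proof -
  define R where "R = gauss_jordan_single B"
  note gj = gauss_jordan_single[OF B R_def[symmetric]]
  have Rc: "R \<in> carrier_mat n p" using gj(2) .
  from gj(4) obtain P Q where PQ: "R = P * B" "P \<in> carrier_mat n n" "Q \<in> carrier_mat n n"
    "P * Q = 1\<^sub>m n" "Q * P = 1\<^sub>m n" by blast
  from gj(3) obtain f where pf: "pivot_fun R f p" unfolding row_echelon_form_def using Rc by auto
  have dR: "dim_row R = n" using Rc by simp
  note pd = pivot_funD[OF dR pf]
  have down: "\<And>i d. i + d < n \<Longrightarrow> f (i + d) < p \<Longrightarrow> f i < p"
  proof -
    fix i d show "i + d < n \<Longrightarrow> f (i + d) < p \<Longrightarrow> f i < p"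
    proof (induct d)
      case (Suc d)
      have "f (Suc (i + d)) > f (i + d) \<or> f (Suc (i + d)) = p" using pd(3)[of "i + d"] Suc(2) by simp
      hence "f (i + d) < p" using Suc(3) by auto
      thus ?case using Suc by simp
    qed simp
  qed
  define S where "S = {i. i = n \<or> (i < n \<and> \<not> f i < p)}"
  define r where "r = (LEAST i. i \<in> S)"
  have nS: "n \<in> S" unfolding S_def by simp
  have rS: "r \<in> S" unfolding r_def by (rule LeastI[of _ n], rule nS)
  have rn: "r \<le> n" unfolding r_def by (rule Least_le, rule nS)
  have lowr: "\<And>i. i < r \<Longrightarrow> f i < p"
  proof -
    fix i assume i: "i < r"
    hence "i \<notin> S" unfolding r_def by (rule not_less_Least)
    thus "f i < p" using i rn unfolding S_def by auto
  qed
  have highr: "\<And>i. r \<le> i \<Longrightarrow> i < n \<Longrightarrow> f i = p"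
  proof -
    fix i assume i: "r \<le> i" "i < n"
    have "r < n" "\<not> f r < p" using rS i unfolding S_def by auto
    have "\<not> f i < p"
    proof
      assume "f i < p"
      with down[of r "i - r"] i have "f r < p" by simp
      with \<open>\<not> f r < p\<close> show False by simp
    qed
    thus "f i = p" using pd(1)[OF i(2)] by simp
  qed
  define G where "G = mat r p (\<lambda>(i,j). R $$ (i,j))"
  define F where "F = mat n r (\<lambda>(i,j). Q $$ (i,j))"
  define L where "L = mat r n (\<lambda>(i,j). P $$ (i,j))"
  define E :: "complex mat" where "E = mat p r (\<lambda>(j,i). if j = f i then 1 else 0)"
  have Gc: "G \<in> carrier_mat r p" unfolding G_def by simp
  have Fc: "F \<in> carrier_mat n r" unfolding F_def by simp
  have Lc: "L \<in> carrier_mat r n" unfolding L_def by simp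
  have Ec: "E \<in> carrier_mat p r" unfolding E_def by simp
  have QR: "Q * R = B"
  proof -
    have "Q * R = (Q * P) * B" unfolding PQ(1) using PQ B by (simp add: assoc_mult_mat[symmetric, of Q n n P n B p])
    thus ?thesis using PQ B by (simp add: left_mult_one_mat)
  qed
  have BFG: "B = F * G"
  proof (rule eq_matI)
    fix i j assume "i < dim_row (F * G)" "j < dim_col (F * G)"
    hence i: "i < n" and j: "j < p" using Fc Gc by auto
    have "B $$ (i,j) = (Q * R) $$ (i,j)" using QR by simp
    also have "\<dots> = (\<Sum>l = 0..<n. Q $$ (i,l) * R $$ (l,j))"
      using i j PQ Rc by (simp add: scalar_prod_def)
    also have "\<dots> = (\<Sum>l = 0..<r. Q $$ (i,l) * R $$ (l,j)) + (\<Sum>l = r..<n. Q $$ (i,l) * R $$ (l,j))"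
      using rn by (simp add: sum.atLeastLessThan_concat)
    also have "(\<Sum>l = r..<n. Q $$ (i,l) * R $$ (l,j)) = 0"
    proof (rule sum.neutral, intro ballI)
      fix l assume l: "l \<in> {r..<n}"
      hence "f l = p" using highr by auto
      hence "R $$ (l,j) = 0" using pd(2)[of l j] l j by auto
      thus "Q $$ (i,l) * R $$ (l,j) = 0" by simp
    qed
    also have "(\<Sum>l = 0..<r. Q $$ (i,l) * R $$ (l,j)) = (F * G) $$ (i,j)"
      using i j rn unfolding F_def G_def by (simp add: scalar_prod_def)
    finally show "B $$ (i,j) = (F * G) $$ (i,j)" by simp
  qed (insert B Fc Gc, auto)
  have LF: "L * F = 1\<^sub>m r"
  proof (rule eq_matI)
    fix i j assume "i < dim_row (1\<^sub>m r)" "j < dim_col (1\<^sub>m r)"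
    hence i: "i < r" and j: "j < r" by auto
    have "(L * F) $$ (i,j) = (\<Sum>l = 0..<n. P $$ (i,l) * Q $$ (l,j))"
      using i j rn unfolding F_def L_def by (simp add: scalar_prod_def)
    also have "\<dots> = (P * Q) $$ (i,j)" using i j rn PQ(2,3) by (simp add: scalar_prod_def)
    also have "\<dots> = 1\<^sub>m n $$ (i,j)" by (simp only: PQ(4))
    also have "\<dots> = 1\<^sub>m r $$ (i,j)" using i j rn by simp
    finally show "(L * F) $$ (i,j) = 1\<^sub>m r $$ (i,j)" .
  qed (insert Lc Fc, auto)
  have GE: "G * E = 1\<^sub>m r"
  proof (rule eq_matI)
    fix i i' assume "i < dim_row (1\<^sub>m r)" "i' < dim_col (1\<^sub>m r)"
    hence i: "i < r" and i': "i' < r" by auto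
    have fi': "f i' < p" using lowr[OF i'] .
    have "(G * E) $$ (i,i') = (\<Sum>j = 0..<p. R $$ (i,j) * (if j = f i' then 1 else 0))"
      using i i' unfolding G_def E_def by (simp add: scalar_prod_def)
    also have "\<dots> = (\<Sum>j \<in> {0..<p}. if j = f i' then R $$ (i,j) else 0)"
      by (rule sum.cong, auto)
    also have "\<dots> = R $$ (i, f i')" using fi' by (simp add: sum.delta)
    also have "\<dots> = 1\<^sub>m r $$ (i,i')"
    proof (cases "i = i'")
      case True thus ?thesis using pd(4)[of i'] fi' i' rn by simp
    next
      case False thus ?thesis using pd(5)[of i' i] fi' i i' rn by simp
    qed
    finally show "(G * E) $$ (i,i') = 1\<^sub>m r $$ (i,i')" .
  qed (insert Gc Ec, auto)
  show ?thesis using Fc Gc Lc Ec LF GE BFG by blast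
qed

lemma mp_exists: fixes B :: "complex mat" assumes B: "B \<in> carrier_mat n p" shows "\<exists>X. is_mp B X"
proof -
  from full_rank_factorization[OF B] obtain r F G L E where
    f: "F \<in> carrier_mat n r" "G \<in> carrier_mat r p" "L \<in> carrier_mat r n" "E \<in> carrier_mat p r"
     "L * F = 1\<^sub>m r" "G * E = 1\<^sub>m r" "B = F * G" by blast
  from mp_exists_factor[OF f(1-6)] f(7) show ?thesis by simp
qed

lemma mp_inverse_is_mp: assumes B: "B \<in> carrier_mat n p" shows "is_mp B (mp_inverse B)"
proof -
  from mp_exists[OF B] obtain X where X: "is_mp B X" by blast
  from mp_inverse_eq[OF B X] X show ?thesis by simp
qed

lemma proj_range_char: assumes B: "B \<in> carrier_mat n p" and P: "P \<in> carrier_mat n n"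
  and h: "adj P = P" and PB: "P * B = B" and Z: "Z \<in> carrier_mat p n" and BZ: "P = B * Z"
  shows "proj_range B = P"
proof -
  define X where "X = mp_inverse B"
  have X: "is_mp B X" unfolding X_def by (rule mp_inverse_is_mp[OF B])
  have Xc: "X \<in> carrier_mat p n" and X1: "B * X * B = B" "adj (B * X) = B * X"
    using X B unfolding is_mp_def by auto
  have QP: "(B * X) * P = P"
  proof -
    have "(B * X) * P = (B * X * B) * Z" unfolding BZ using B Xc Z by (simp add: msimps)
    thus ?thesis using X1 BZ by simp
  qed
  have PQ: "P * (B * X) = B * X"
  proof -
    have "P * (B * X) = (P * B) * X" using B Xc P by (simp add: msimps)
    thus ?thesis using PB by simp
  qed
  have "B * X = adj (B * X)" using X1 by simp
  also have "\<dots> = adj (P * (B * X))" using PQ by simp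
  also have "\<dots> = adj (B * X) * adj P" by (rule adj_mult[OF P], insert B Xc, simp)
  also have "\<dots> = (B * X) * P" using X1 h by simp
  also have "\<dots> = P" by (rule QP)
  finally show ?thesis unfolding proj_range_def X_def .
qed

lemma (in vec_space) rank_mult_le: assumes X: "X \<in> carrier_mat n p" and Y: "Y \<in> carrier_mat p q"
  shows "rank (X * Y) \<le> rank X"
proof -
  define W1 where "W1 = span (set (cols X))"
  have cX: "set (cols X) \<subseteq> carrier_vec n" using X cols_dim by (metis carrier_matD(1))
  have cXY: "set (cols (X * Y)) \<subseteq> carrier_vec n" using X Y cols_dim
    by (metis carrier_matD(1) mult_carrier_mat)
  have sub1: "set (cols (X * Y)) \<subseteq> W1"
  proof
    fix x assume "x \<in> set (cols (X * Y))"
    then obtain j where j: "j < dim_col (X * Y)" and xj: "x = col (X * Y) j"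
      by (metis cols_length cols_nth in_set_conv_nth)
    have j': "j < q" using j Y by simp
    have "x = X *\<^sub>v col Y j" using xj col_mult2[OF X Y j'] by simp
    moreover have "col Y j \<in> carrier_vec (dim_col X)" using X Y j' by simp
    moreover have "X *\<^sub>v col Y j \<in> carrier_vec (dim_row X)" by (intro carrier_vecI, simp)
    ultimately have "x \<in> col_space X" unfolding col_space_eq[OF X] by blast
    thus "x \<in> W1" unfolding W1_def col_space_def .
  qed
  have sW1: "VectorSpace.subspace class_ring W1 V" unfolding W1_def by (rule span_is_subspace[OF cX])
  have sXY: "VectorSpace.subspace class_ring (span (set (cols (X * Y)))) V" by (rule span_is_subspace[OF cXY])
  have "span (set (cols (X * Y))) \<subseteq> W1"
    using sW1 sub1 unfolding VectorSpace.subspace_def by (intro span_is_subset, auto)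
  from nested_subspaces[OF sW1 sXY this]
  have subspace: "VectorSpace.subspace class_ring (span (set (cols (X * Y)))) (vs W1)" .
  have fW1: "vectorspace.fin_dim class_ring (vs W1)" unfolding W1_def by (rule fin_dim_span_cols[OF X])
  have fXY: "vectorspace.fin_dim class_ring (span_vs (set (cols (X * Y))))"
    by (rule fin_dim_span_cols, insert X Y, auto)
  have "rank (X * Y) \<le> vectorspace.dim class_ring (vs W1)" unfolding rank_def
    using vectorspace.subspace_dim[OF subspace_is_vs[OF sW1] subspace fW1] fXY by auto
  also have "\<dots> = rank X" unfolding rank_def W1_def by simp
  finally show ?thesis .
qed

lemma (in vec_space) rank_left_inv: assumes C: "C \<in> carrier_mat n c" and L: "L \<in> carrier_mat c n"
  and LC: "L * C = 1\<^sub>m c"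
  shows "rank C = c"
proof -
  have inj: "\<And>v. v \<in> carrier_vec c \<Longrightarrow> C *\<^sub>v v = 0\<^sub>v n \<Longrightarrow> v = 0\<^sub>v c"
  proof -
    fix v assume v: "v \<in> carrier_vec c" and Cv: "C *\<^sub>v v = 0\<^sub>v n"
    have "v = (L * C) *\<^sub>v v" using LC v by simp
    also have "\<dots> = L *\<^sub>v (C *\<^sub>v v)" by (rule assoc_mult_mat_vec[OF L C v])
    also have "\<dots> = 0\<^sub>v c" unfolding Cv using L by (intro eq_vecI, auto simp: scalar_prod_def)
    finally show "v = 0\<^sub>v c" .
  qed
  have dist: "distinct (cols C)"
  proof (rule ccontr)
    assume "\<not> distinct (cols C)"
    then obtain i j where ij: "i < c" "j < c" "i \<noteq> j" "cols C ! i = cols C ! j"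
      using C unfolding distinct_conv_nth by auto
    have "col C i = col C j" using ij C by simp
    hence "col (L * C) i = col (L * C) j" using col_mult2[OF L C ij(1)] col_mult2[OF L C ij(2)] by simp
    hence "col (L * C) i $ i = col (L * C) j $ i" by simp
    thus False using ij unfolding LC by simp
  qed
  have li: "lin_indpt (set (cols C))"
  proof
    assume "lin_dep (set (cols C))"
    from lin_depE[OF C this dist] obtain v where "v \<in> carrier_vec c" "v \<noteq> 0\<^sub>v c" "C *\<^sub>v v = 0\<^sub>v n" by blast
    with inj show False by blast
  qed
  show ?thesis by (rule lin_indpt_full_rank[OF C dist li])
qed

lemma pow_Suc_left: assumes X: "X \<in> carrier_mat a a"
  shows "X ^\<^sub>m (Suc j) = X * X ^\<^sub>m j"
proof (induct j)
  case 0
  then show ?case using X by (simp add: left_mult_one_mat right_mult_one_mat)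
next
  case (Suc j)
  have "X ^\<^sub>m Suc (Suc j) = (X * X ^\<^sub>m j) * X" using Suc by simp
  also have "\<dots> = X * (X ^\<^sub>m j * X)" using X by (simp add: msimps)
  finally show ?case by simp
qed

lemma pow_inv: assumes X: "X \<in> carrier_mat a a" and Y: "Y \<in> carrier_mat a a" and YX: "Y * X = 1\<^sub>m a"
  shows "Y ^\<^sub>m j * X ^\<^sub>m j = 1\<^sub>m a"
proof (induct j)
  case 0
  then show ?case using X Y by (simp add: left_mult_one_mat')
next
  case (Suc j)
  have "Y ^\<^sub>m Suc j * X ^\<^sub>m Suc j = (Y ^\<^sub>m j * Y) * (X * X ^\<^sub>m j)"
    using pow_Suc_left[OF X, of j] by simp
  also have "\<dots> = Y ^\<^sub>m j * ((Y * X) * X ^\<^sub>m j)" using X Y by (simp add: msimps)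
  also have "\<dots> = Y ^\<^sub>m j * X ^\<^sub>m j" using YX X by (simp add: left_mult_one_mat)
  finally show ?case using Suc by simp
qed

locale cep =
  fixes n t :: nat and T S N U :: "complex mat"
  assumes tn: "t \<le> n" and Tc: "T \<in> carrier_mat t t" and Tinvertible: "invertible_mat T"
    and Sc: "S \<in> carrier_mat t (n - t)" and Nc: "N \<in> carrier_mat (n - t) (n - t)" and Uu: "unitary_mat n U"
begin

definition Ap where "Ap = four_block_mat T S (0\<^sub>m (n - t) t) N"
definition Sj where "Sj j = mat_sum t (n - t) (\<lambda>i. T ^\<^sub>m i * S * N ^\<^sub>m (j - 1 - i)) [0..<j]"
definition Ti where "Ti = inv_mat T"

lemma Ti: "Ti \<in> carrier_mat t t" "T * Ti = 1\<^sub>m t" "Ti * T = 1\<^sub>m t"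
  using inv_matD[OF Tc Tinvertible] unfolding Ti_def by auto

lemma U: "U \<in> carrier_mat n n" "adj U \<in> carrier_mat n n" "U * adj U = 1\<^sub>m n" "adj U * U = 1\<^sub>m n"
  using unitaryD[OF Uu] by auto

lemma tn': "t + (n - t) = n" using tn by simp

lemma Apc: "Ap \<in> carrier_mat n n"
proof -
  have "Ap \<in> carrier_mat (t + (n - t)) (t + (n - t))" unfolding Ap_def using Tc Sc Nc by simp
  thus ?thesis unfolding tn' .
qed

lemma term_carrier: "T ^\<^sub>m i * S * N ^\<^sub>m l \<in> carrier_mat t (n - t)"
  using Tc Sc Nc by simp

lemma Sjc: "Sj j \<in> carrier_mat t (n - t)"
  unfolding Sj_def by (rule mat_sum_carrier, rule term_carrier)

lemma Sj_Suc: "Sj (Suc j) = T ^\<^sub>m j * S + Sj j * N"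
proof -
  have "Sj (Suc j) = mat_sum t (n - t) (\<lambda>i. T ^\<^sub>m i * S * N ^\<^sub>m (j - i)) [0..<Suc j]"
    unfolding Sj_def by simp
  also have "\<dots> = mat_sum t (n - t) (\<lambda>i. T ^\<^sub>m i * S * N ^\<^sub>m (j - i)) [0..<j] + T ^\<^sub>m j * S * N ^\<^sub>m (j - j)"
    by (rule mat_sum_Suc, rule term_carrier)
  also have "T ^\<^sub>m j * S * N ^\<^sub>m (j - j) = T ^\<^sub>m j * S" using Tc Sc Nc by (simp add: right_mult_one_mat)
  also have "mat_sum t (n - t) (\<lambda>i. T ^\<^sub>m i * S * N ^\<^sub>m (j - i)) [0..<j]
    = mat_sum t (n - t) (\<lambda>i. T ^\<^sub>m i * S * N ^\<^sub>m (j - 1 - i) * N) [0..<j]"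
  proof (rule mat_sum_cong)
    fix i assume "i \<in> set [0..<j]"
    hence "j - i = Suc (j - 1 - i)" by auto
    hence "N ^\<^sub>m (j - i) = N ^\<^sub>m (j - 1 - i) * N" by simp
    thus "T ^\<^sub>m i * S * N ^\<^sub>m (j - i) = T ^\<^sub>m i * S * N ^\<^sub>m (j - 1 - i) * N"
      using Tc Sc Nc by (simp add: msimps)
  qed
  also have "\<dots> = Sj j * N" unfolding Sj_def
    by (rule mat_sum_mult_right[symmetric], rule term_carrier, rule Nc)
  finally have e: "Sj (Suc j) = Sj j * N + T ^\<^sub>m j * S" .
  have c1: "Sj j * N \<in> carrier_mat t (n - t)" using Sjc[of j] Nc by simp
  have c2: "T ^\<^sub>m j * S \<in> carrier_mat t (n - t)" using Tc Sc by simp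
  show ?thesis unfolding e by (rule comm_add_mat[OF c1 c2])
qed

lemma Ap_pow: "Ap ^\<^sub>m j = four_block_mat (T ^\<^sub>m j) (Sj j) (0\<^sub>m (n - t) t) (N ^\<^sub>m j)"
proof (induct j)
  case 0
  have "Ap ^\<^sub>m 0 = 1\<^sub>m n" using Apc by simp
  also have "\<dots> = 1\<^sub>m (t + (n - t))" unfolding tn' ..
  also have "\<dots> = four_block_mat (1\<^sub>m t) (0\<^sub>m t (n - t)) (0\<^sub>m (n - t) t) (1\<^sub>m (n - t))"
    by (rule four_block_one_mat[symmetric])
  also have "\<dots> = four_block_mat (T ^\<^sub>m 0) (Sj 0) (0\<^sub>m (n - t) t) (N ^\<^sub>m 0)"
    using Tc Nc unfolding Sj_def mat_sum_def by simp
  finally show ?case .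
next
  case (Suc j)
  have "Ap ^\<^sub>m Suc j = four_block_mat (T ^\<^sub>m j) (Sj j) (0\<^sub>m (n - t) t) (N ^\<^sub>m j) * Ap"
    using Suc by simp
  also have "\<dots> = four_block_mat (T ^\<^sub>m j * T + Sj j * 0\<^sub>m (n - t) t) (T ^\<^sub>m j * S + Sj j * N)
     (0\<^sub>m (n - t) t * T + N ^\<^sub>m j * 0\<^sub>m (n - t) t) (0\<^sub>m (n - t) t * S + N ^\<^sub>m j * N)"
    unfolding Ap_def by (rule mult_four_block_mat, insert Tc Sc Nc Sjc, auto)
  also have "\<dots> = four_block_mat (T ^\<^sub>m Suc j) (Sj (Suc j)) (0\<^sub>m (n - t) t) (N ^\<^sub>m Suc j)"
  proof -
    have c1: "T ^\<^sub>m j * T \<in> carrier_mat t t" using Tc by simp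
    have c2: "N ^\<^sub>m j * N \<in> carrier_mat (n - t) (n - t)" using Nc by simp
    have z: "Sj j * 0\<^sub>m (n - t) t = 0\<^sub>m t t" using Sjc[of j] by simp
    show ?thesis unfolding Sj_Suc z using Tc Sc Nc c1 c2 by simp
  qed
  finally show ?case .
qed

end

context cep begin

lemma dims[simp]: "dim_row T = t" "dim_col T = t" "dim_row S = t" "dim_col S = n - t"
  "dim_row N = n - t" "dim_col N = n - t" "dim_row U = n" "dim_col U = n" "dim_row Ti = t" "dim_col Ti = t"
  "dim_row (Sj j) = t" "dim_col (Sj j) = n - t" "dim_row Ap = n" "dim_col Ap = n"
  using Tc Sc Nc U(1) Ti(1) Sjc[of j] Apc by auto

definition Af where "Af = U * Ap * adj U"

lemma Afc: "Af \<in> carrier_mat n n" unfolding Af_def using U Apc by simp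

lemma Af_dims[simp]: "dim_row Af = n" "dim_col Af = n" using Afc by auto

lemma Af_pow: "Af ^\<^sub>m j = U * Ap ^\<^sub>m j * adj U"
  unfolding Af_def by (rule conj_pow[OF Uu Apc])

lemma Af_pow_U: "Af ^\<^sub>m j * U = U * Ap ^\<^sub>m j"
proof -
  have c: "Ap ^\<^sub>m j \<in> carrier_mat n n" using Apc by simp
  have "Af ^\<^sub>m j * U = U * Ap ^\<^sub>m j * (adj U * U)" unfolding Af_pow using U c Apc by (simp add: msimps)
  thus ?thesis using U c Apc by (simp add: msimps)
qed

lemma Tpow: "Ti ^\<^sub>m j * T ^\<^sub>m j = 1\<^sub>m t" "T ^\<^sub>m j * Ti ^\<^sub>m j = 1\<^sub>m t"
  using pow_inv[OF Tc Ti(1) Ti(3)] pow_inv[OF Ti(1) Tc Ti(2)] by auto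

lemma N_nil: assumes tk: "t = crank (Af ^\<^sub>m k)" shows "N ^\<^sub>m k = 0\<^sub>m (n - t) (n - t)"
proof (rule ccontr)
  assume ne: "N ^\<^sub>m k \<noteq> 0\<^sub>m (n - t) (n - t)"
  have Nk: "N ^\<^sub>m k \<in> carrier_mat (n - t) (n - t)" using Nc by simp
  have "\<exists>i0 j0. i0 < n - t \<and> j0 < n - t \<and> (N ^\<^sub>m k) $$ (i0, j0) \<noteq> 0"
  proof (rule ccontr)
    assume "\<not> ?thesis"
    hence "N ^\<^sub>m k = 0\<^sub>m (n - t) (n - t)" using Nk by (intro eq_matI, auto)
    with ne show False by simp
  qed
  then obtain i0 j0 where ij: "i0 < n - t" "j0 < n - t" and c0: "(N ^\<^sub>m k) $$ (i0, j0) \<noteq> 0" by blast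
  define c where "c = (N ^\<^sub>m k) $$ (i0, j0)"
  define ej :: "complex mat" where "ej = mat (n - t) 1 (\<lambda>(i,_). if i = j0 then 1 else 0)"
  define x where "x = N ^\<^sub>m k * ej"
  define y :: "complex mat" where "y = mat 1 (n - t) (\<lambda>(_,l). if l = i0 then 1 / c else 0)"
  define W where "W = Sj k * ej"
  have ejc: "ej \<in> carrier_mat (n - t) 1" unfolding ej_def by simp
  have xc: "x \<in> carrier_mat (n - t) 1" unfolding x_def using Nk ejc Nc by (simp add: msimps)
  have yc: "y \<in> carrier_mat 1 (n - t)" unfolding y_def by simp
  have Wc: "W \<in> carrier_mat t 1" unfolding W_def using Sjc ejc by simp
  have x0: "x $$ (i0, 0) = c"
  proof -
    have "x $$ (i0, 0) = (\<Sum>l = 0..<n - t. (N ^\<^sub>m k) $$ (i0, l) * (if l = j0 then 1 else 0))"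
      unfolding x_def ej_def using ij Nk by (simp add: scalar_prod_def)
    also have "\<dots> = (\<Sum>l \<in> {0..<n - t}. if l = j0 then (N ^\<^sub>m k) $$ (i0, l) else 0)" by (rule sum.cong, auto)
    also have "\<dots> = c" using ij unfolding c_def by (simp add: sum.delta)
    finally show ?thesis .
  qed
  have yx: "y * x = 1\<^sub>m 1"
  proof (rule eq_matI)
    fix a b assume "a < dim_row (1\<^sub>m 1)" "b < dim_col (1\<^sub>m 1)"
    hence ab: "a = 0" "b = 0" by auto
    have "(y * x) $$ (0, 0) = (\<Sum>l = 0..<n - t. (if l = i0 then 1 / c else 0) * x $$ (l, 0))"
      unfolding y_def using xc ij by (simp add: scalar_prod_def)
    also have "\<dots> = (\<Sum>l \<in> {0..<n - t}. if l = i0 then 1 / c * x $$ (l, 0) else 0)" by (rule sum.cong, auto)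
    also have "\<dots> = 1 / c * c" using ij x0 by (simp add: sum.delta)
    also have "\<dots> = 1" using c0 unfolding c_def by simp
    finally show "(y * x) $$ (a, b) = 1\<^sub>m 1 $$ (a, b)" using ab by simp
  qed (insert yc xc, auto)
  define E where "E = four_block_mat (1\<^sub>m t) (0\<^sub>m t 1) (0\<^sub>m (n - t) t) ej"
  have Ec': "E \<in> carrier_mat (t + (n - t)) (t + 1)" unfolding E_def by (rule four_block_carrier_mat[OF one_carrier_mat ejc])
  have Ec: "E \<in> carrier_mat n (t + 1)" using Ec' by (simp only: tn')
  have ApE: "Ap ^\<^sub>m k * E = four_block_mat (T ^\<^sub>m k) W (0\<^sub>m (n - t) t) x"
  proof -
    have "Ap ^\<^sub>m k * E = four_block_mat (T ^\<^sub>m k * 1\<^sub>m t + Sj k * 0\<^sub>m (n - t) t) (T ^\<^sub>m k * 0\<^sub>m t 1 + Sj k * ej)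
      (0\<^sub>m (n - t) t * 1\<^sub>m t + N ^\<^sub>m k * 0\<^sub>m (n - t) t) (0\<^sub>m (n - t) t * 0\<^sub>m t 1 + N ^\<^sub>m k * ej)"
      unfolding Ap_pow E_def by (rule mult_four_block_mat[OF pow_carrier_mat[OF Tc] Sjc zero_carrier_mat Nk
        one_carrier_mat zero_carrier_mat zero_carrier_mat ejc])
    also have "\<dots> = four_block_mat (T ^\<^sub>m k) W (0\<^sub>m (n - t) t) x"
    proof -
      have a: "T ^\<^sub>m k * 1\<^sub>m t + Sj k * 0\<^sub>m (n - t) t = T ^\<^sub>m k"
        using Tc Sjc[of k] by (simp add: right_mult_one_mat)
      have b: "T ^\<^sub>m k * 0\<^sub>m t 1 + Sj k * ej = W" unfolding W_def using Tc Sjc[of k] ejc by simp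
      have c: "0\<^sub>m (n - t) t * 1\<^sub>m t + N ^\<^sub>m k * 0\<^sub>m (n - t) t = 0\<^sub>m (n - t) t" using Nk by simp
      have d: "0\<^sub>m (n - t) t * 0\<^sub>m t 1 + N ^\<^sub>m k * ej = x" unfolding x_def using Nk ejc by simp
      show ?thesis unfolding a b c d ..
    qed
    finally show ?thesis .
  qed
  define M where "M = Ti ^\<^sub>m k * W"
  have Mc: "M \<in> carrier_mat t 1" unfolding M_def using Ti(1) Wc by simp
  define L0 where "L0 = four_block_mat (Ti ^\<^sub>m k) (- (M * y)) (0\<^sub>m 1 t) y"
  have L0c': "L0 \<in> carrier_mat (t + 1) (t + (n - t))" unfolding L0_def by (rule four_block_carrier_mat[OF pow_carrier_mat[OF Ti(1)] yc])
  have L0c: "L0 \<in> carrier_mat (t + 1) n" using L0c' by (simp only: tn')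
  have L0ApE: "L0 * (Ap ^\<^sub>m k * E) = 1\<^sub>m (t + 1)"
  proof -
    have My: "- (M * y) \<in> carrier_mat t (n - t)" using Mc yc by simp
    have "L0 * (Ap ^\<^sub>m k * E) = four_block_mat (Ti ^\<^sub>m k * T ^\<^sub>m k + (- (M * y)) * 0\<^sub>m (n - t) t)
       (Ti ^\<^sub>m k * W + (- (M * y)) * x) (0\<^sub>m 1 t * T ^\<^sub>m k + y * 0\<^sub>m (n - t) t) (0\<^sub>m 1 t * W + y * x)"
      unfolding ApE L0_def by (rule mult_four_block_mat[OF pow_carrier_mat[OF Ti(1)] My zero_carrier_mat yc
        pow_carrier_mat[OF Tc] Wc zero_carrier_mat xc])
    also have "\<dots> = four_block_mat (1\<^sub>m t) (0\<^sub>m t 1) (0\<^sub>m 1 t) (1\<^sub>m 1)"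
    proof -
      have a: "Ti ^\<^sub>m k * T ^\<^sub>m k + (- (M * y)) * 0\<^sub>m (n - t) t = 1\<^sub>m t" using Tpow(1)[of k] My by simp
      have "(- (M * y)) * x = - (M * y * x)" using Mc yc xc by (simp add: uminus_mult_left_mat)
      also have "M * y * x = M * (y * x)" using Mc yc xc by (simp add: msimps)
      also have "\<dots> = M" unfolding yx using Mc by (simp add: right_mult_one_mat)
      finally have "(- (M * y)) * x = - M" .
      hence b: "Ti ^\<^sub>m k * W + (- (M * y)) * x = 0\<^sub>m t 1" unfolding M_def[symmetric]
        using Mc by (intro eq_matI, auto)
      have c: "0\<^sub>m 1 t * T ^\<^sub>m k + y * 0\<^sub>m (n - t) t = 0\<^sub>m 1 t" using Tc yc by simp
      have d: "0\<^sub>m 1 t * W + y * x = 1\<^sub>m 1" using Wc yx by simp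
      show ?thesis unfolding a b c d ..
    qed
    also have "\<dots> = 1\<^sub>m (t + 1)" by (rule four_block_one_mat)
    finally show ?thesis .
  qed
  define C where "C = Af ^\<^sub>m k * U * E"
  have Akc: "Af ^\<^sub>m k \<in> carrier_mat n n" using Afc by simp
  have Cc: "C \<in> carrier_mat n (t + 1)" unfolding C_def using Akc U Ec by simp
  have CU: "C = U * (Ap ^\<^sub>m k * E)"
    unfolding C_def Af_pow_U using U Apc Ec by (simp add: msimps)
  define Lf where "Lf = L0 * adj U"
  have Lfc: "Lf \<in> carrier_mat (t + 1) n" unfolding Lf_def using L0c U by simp
  have LfC: "Lf * C = 1\<^sub>m (t + 1)"
  proof -
    have "Lf * C = L0 * (adj U * (U * (Ap ^\<^sub>m k * E)))" unfolding Lf_def CU using L0c U Apc Ec by (simp add: msimps)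
    also have "adj U * (U * (Ap ^\<^sub>m k * E)) = Ap ^\<^sub>m k * E" by (rule cancel_left[OF U(4)], insert Ec, auto)
    finally show ?thesis using L0ApE by simp
  qed
  have r1: "vec_space.rank n C = t + 1" by (rule vec_space.rank_left_inv[OF Cc Lfc LfC])
  have r2: "vec_space.rank n C \<le> vec_space.rank n (Af ^\<^sub>m k * U)"
    unfolding C_def by (rule vec_space.rank_mult_le, insert Akc U Ec, auto)
  have r3: "vec_space.rank n (Af ^\<^sub>m k * U) \<le> vec_space.rank n (Af ^\<^sub>m k)"
    by (rule vec_space.rank_mult_le[OF Akc U(1)])
  have r4: "crank (Af ^\<^sub>m k) = vec_space.rank n (Af ^\<^sub>m k)" unfolding crank_def using Akc by simp
  from r1 r2 r3 r4 tk show False by simp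
qed

end

context cep begin

definition blk :: "complex mat \<Rightarrow> complex mat" where "blk M = four_block_mat M (0\<^sub>m t (n - t)) (0\<^sub>m (n - t) t) (0\<^sub>m (n - t) (n - t))"

lemma blk_carrier: assumes "M \<in> carrier_mat t t" shows "blk M \<in> carrier_mat n n"
proof -
  have "blk M \<in> carrier_mat (t + (n - t)) (t + (n - t))" unfolding blk_def
    by (rule four_block_carrier_mat[OF assms zero_carrier_mat])
  thus ?thesis by (simp only: tn')
qed

lemma blk_mult: assumes M: "M \<in> carrier_mat t t" and M': "M' \<in> carrier_mat t t"
  shows "blk M * blk M' = blk (M * M')"
proof -
  have "blk M * blk M' = four_block_mat (M * M' + 0\<^sub>m t (n - t) * 0\<^sub>m (n - t) t) (M * 0\<^sub>m t (n - t) + 0\<^sub>m t (n - t) * 0\<^sub>m (n - t) (n - t))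
    (0\<^sub>m (n - t) t * M' + 0\<^sub>m (n - t) (n - t) * 0\<^sub>m (n - t) t) (0\<^sub>m (n - t) t * 0\<^sub>m t (n - t) + 0\<^sub>m (n - t) (n - t) * 0\<^sub>m (n - t) (n - t))"
    unfolding blk_def by (rule mult_four_block_mat[OF M zero_carrier_mat zero_carrier_mat zero_carrier_mat M' zero_carrier_mat zero_carrier_mat zero_carrier_mat])
  also have "\<dots> = blk (M * M')" unfolding blk_def using M M' by simp
  finally show ?thesis .
qed

lemma adj_blk: assumes M: "M \<in> carrier_mat t t" shows "adj (blk M) = blk (adj M)"
  unfolding blk_def by (simp add: adj_four_block[OF M zero_carrier_mat zero_carrier_mat zero_carrier_mat])

definition P0 :: "complex mat" where "P0 = blk (1\<^sub>m t)"

lemma P0c: "P0 \<in> carrier_mat n n" unfolding P0_def by (rule blk_carrier, simp)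

lemma P0_dims[simp]: "dim_row P0 = n" "dim_col P0 = n" using P0c by auto

lemma P0_blk: assumes M: "M \<in> carrier_mat t t" shows "P0 * blk M = blk M" "blk M * P0 = blk M"
  unfolding P0_def using blk_mult[OF one_carrier_mat M] blk_mult[OF M one_carrier_mat] M
  by (auto simp: msimps)

lemma adj_P0: "adj P0 = P0" unfolding P0_def by (simp add: adj_blk)

lemma Ap_pow_nil: assumes nil: "N ^\<^sub>m k = 0\<^sub>m (n - t) (n - t)"
  shows "Ap ^\<^sub>m k = four_block_mat (T ^\<^sub>m k) (Sj k) (0\<^sub>m (n - t) t) (0\<^sub>m (n - t) (n - t))"
  unfolding Ap_pow nil ..

lemma range_Ak: assumes nil: "N ^\<^sub>m k = 0\<^sub>m (n - t) (n - t)"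
  shows "mat_range (Af ^\<^sub>m k) = mat_range (U * P0)"
proof -
  have Apk: "Ap ^\<^sub>m k \<in> carrier_mat n n" using Apc by simp
  have P0Ap: "P0 * Ap ^\<^sub>m k = Ap ^\<^sub>m k"
  proof -
    have "P0 * Ap ^\<^sub>m k = four_block_mat (1\<^sub>m t * T ^\<^sub>m k + 0\<^sub>m t (n - t) * 0\<^sub>m (n - t) t) (1\<^sub>m t * Sj k + 0\<^sub>m t (n - t) * 0\<^sub>m (n - t) (n - t))
      (0\<^sub>m (n - t) t * T ^\<^sub>m k + 0\<^sub>m (n - t) (n - t) * 0\<^sub>m (n - t) t) (0\<^sub>m (n - t) t * Sj k + 0\<^sub>m (n - t) (n - t) * 0\<^sub>m (n - t) (n - t))"
      unfolding P0_def blk_def Ap_pow_nil[OF nil]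
      by (rule mult_four_block_mat[OF one_carrier_mat zero_carrier_mat zero_carrier_mat zero_carrier_mat
          pow_carrier_mat[OF Tc] Sjc zero_carrier_mat zero_carrier_mat])
    also have "\<dots> = Ap ^\<^sub>m k" unfolding Ap_pow_nil[OF nil] using Tc Sjc[of k] by (simp add: left_mult_one_mat)
    finally show ?thesis .
  qed
  have ApTi: "Ap ^\<^sub>m k * blk (Ti ^\<^sub>m k) = P0"
  proof -
    have "Ap ^\<^sub>m k * blk (Ti ^\<^sub>m k) = four_block_mat (T ^\<^sub>m k * Ti ^\<^sub>m k + Sj k * 0\<^sub>m (n - t) t) (T ^\<^sub>m k * 0\<^sub>m t (n - t) + Sj k * 0\<^sub>m (n - t) (n - t))
      (0\<^sub>m (n - t) t * Ti ^\<^sub>m k + 0\<^sub>m (n - t) (n - t) * 0\<^sub>m (n - t) t) (0\<^sub>m (n - t) t * 0\<^sub>m t (n - t) + 0\<^sub>m (n - t) (n - t) * 0\<^sub>m (n - t) (n - t))"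
      unfolding blk_def Ap_pow_nil[OF nil]
      by (rule mult_four_block_mat[OF pow_carrier_mat[OF Tc] Sjc zero_carrier_mat zero_carrier_mat
          pow_carrier_mat[OF Ti(1)] zero_carrier_mat zero_carrier_mat zero_carrier_mat])
    also have "\<dots> = P0" unfolding P0_def blk_def using Tpow(2)[of k] Tc Sjc[of k] by simp
    finally show ?thesis .
  qed
  have Tik: "blk (Ti ^\<^sub>m k) \<in> carrier_mat n n" by (rule blk_carrier, insert Ti(1), simp)
  show ?thesis
  proof (rule range_eqI[of _ n n _ n "Ap ^\<^sub>m k * adj U" "U * blk (Ti ^\<^sub>m k)"])
    show "Af ^\<^sub>m k \<in> carrier_mat n n" using Afc by simp
    show "U * P0 \<in> carrier_mat n n" using U P0c by simp
    show "Ap ^\<^sub>m k * adj U \<in> carrier_mat n n" using Apk U by simp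
    show "U * blk (Ti ^\<^sub>m k) \<in> carrier_mat n n" using U Tik by simp
    show "Af ^\<^sub>m k = U * P0 * (Ap ^\<^sub>m k * adj U)"
    proof -
      have "U * P0 * (Ap ^\<^sub>m k * adj U) = U * ((P0 * Ap ^\<^sub>m k) * adj U)" using U P0c Apk Apc by (simp add: msimps)
      thus ?thesis unfolding P0Ap Af_pow using U Apk Apc by (simp add: msimps)
    qed
    show "U * P0 = Af ^\<^sub>m k * (U * blk (Ti ^\<^sub>m k))"
    proof -
      have "Af ^\<^sub>m k * (U * blk (Ti ^\<^sub>m k)) = (Af ^\<^sub>m k * U) * blk (Ti ^\<^sub>m k)" using U Afc Tik by (simp add: msimps)
      also have "\<dots> = U * (Ap ^\<^sub>m k * blk (Ti ^\<^sub>m k))" unfolding Af_pow_U using U Apk Tik Apc by (simp add: msimps)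
      finally show ?thesis unfolding ApTi by simp
    qed
  qed
qed

lemma range_blk: assumes M: "M \<in> carrier_mat t t" and M': "M' \<in> carrier_mat t t" and MM: "M * M' = 1\<^sub>m t"
  shows "mat_range (U * blk M * adj U) = mat_range (U * P0)"
proof -
  have bM: "blk M \<in> carrier_mat n n" by (rule blk_carrier[OF M])
  have bM': "blk M' \<in> carrier_mat n n" by (rule blk_carrier[OF M'])
  show ?thesis
  proof (rule range_eqI[of _ n n _ n "blk M * adj U" "U * blk M'"])
    show "U * blk M * adj U \<in> carrier_mat n n" using U bM by simp
    show "U * P0 \<in> carrier_mat n n" using U P0c by simp
    show "blk M * adj U \<in> carrier_mat n n" using U bM by simp
    show "U * blk M' \<in> carrier_mat n n" using U bM' by simp
    show "U * blk M * adj U = U * P0 * (blk M * adj U)"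
    proof -
      have "U * P0 * (blk M * adj U) = U * ((P0 * blk M) * adj U)" using U P0c bM by (simp add: msimps)
      thus ?thesis unfolding P0_blk[OF M] using U bM by (simp add: msimps)
    qed
    show "U * P0 = U * blk M * adj U * (U * blk M')"
    proof -
      have "U * blk M * adj U * (U * blk M') = U * (blk M * (adj U * (U * blk M')))" using U bM bM' by (simp add: msimps)
      also have "adj U * (U * blk M') = blk M'" by (rule cancel_left[OF U(4)], insert U bM', auto)
      also have "blk M * blk M' = P0" unfolding blk_mult[OF M M'] MM P0_def ..
      finally show ?thesis ..
    qed
  qed
qed

definition C0 where "C0 = U * blk Ti * adj U"

lemma C0c: "C0 \<in> carrier_mat n n" unfolding C0_def using U blk_carrier[OF Ti(1)] by simp

lemma C0_outer: "C0 * Af * C0 = C0"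
proof -
  have bTi: "blk Ti \<in> carrier_mat n n" by (rule blk_carrier[OF Ti(1)])
  have "C0 * Af * C0 = U * (blk Ti * Ap * blk Ti) * adj U"
    unfolding C0_def Af_def using conj_mult[OF Uu bTi Apc] conj_mult[OF Uu _ bTi] bTi Apc by simp
  also have "blk Ti * Ap * blk Ti = blk Ti"
  proof -
    have "blk Ti * Ap = four_block_mat (Ti * T + 0\<^sub>m t (n - t) * 0\<^sub>m (n - t) t) (Ti * S + 0\<^sub>m t (n - t) * N)
      (0\<^sub>m (n - t) t * T + 0\<^sub>m (n - t) (n - t) * 0\<^sub>m (n - t) t) (0\<^sub>m (n - t) t * S + 0\<^sub>m (n - t) (n - t) * N)"
      unfolding blk_def Ap_def
      by (rule mult_four_block_mat[OF Ti(1) zero_carrier_mat zero_carrier_mat zero_carrier_mat Tc Sc zero_carrier_mat Nc])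
    also have "\<dots> = four_block_mat (1\<^sub>m t) (Ti * S) (0\<^sub>m (n - t) t) (0\<^sub>m (n - t) (n - t))"
      using Ti Tc Sc Nc by simp
    finally have e: "blk Ti * Ap = four_block_mat (1\<^sub>m t) (Ti * S) (0\<^sub>m (n - t) t) (0\<^sub>m (n - t) (n - t))" .
    have TiS: "Ti * S \<in> carrier_mat t (n - t)" using Ti(1) Sc by simp
    have "four_block_mat (1\<^sub>m t) (Ti * S) (0\<^sub>m (n - t) t) (0\<^sub>m (n - t) (n - t)) * blk Ti =
      four_block_mat (1\<^sub>m t * Ti + Ti * S * 0\<^sub>m (n - t) t) (1\<^sub>m t * 0\<^sub>m t (n - t) + Ti * S * 0\<^sub>m (n - t) (n - t))
      (0\<^sub>m (n - t) t * Ti + 0\<^sub>m (n - t) (n - t) * 0\<^sub>m (n - t) t) (0\<^sub>m (n - t) t * 0\<^sub>m t (n - t) + 0\<^sub>m (n - t) (n - t) * 0\<^sub>m (n - t) (n - t))"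
      unfolding blk_def
      by (rule mult_four_block_mat[OF one_carrier_mat TiS zero_carrier_mat zero_carrier_mat Ti(1) zero_carrier_mat zero_carrier_mat zero_carrier_mat])
    also have "\<dots> = blk Ti" unfolding blk_def using Ti(1) TiS by (simp add: left_mult_one_mat)
    finally show ?thesis unfolding e .
  qed
  finally show ?thesis unfolding C0_def .
qed

lemma C0_range: assumes nil: "N ^\<^sub>m k = 0\<^sub>m (n - t) (n - t)"
  shows "mat_range C0 = mat_range (Af ^\<^sub>m k)" "mat_range (adj C0) = mat_range (Af ^\<^sub>m k)"
proof -
  show "mat_range C0 = mat_range (Af ^\<^sub>m k)" unfolding range_Ak[OF nil] C0_def
    by (rule range_blk[OF Ti(1) Tc Ti(3)])
  have "adj C0 = U * blk (adj Ti) * adj U" unfolding C0_def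
    using conj_adj[OF Uu blk_carrier[OF Ti(1)]] adj_blk[OF Ti(1)] by simp
  also have "mat_range \<dots> = mat_range (U * P0)"
  proof (rule range_blk)
    show "adj Ti \<in> carrier_mat t t" "adj T \<in> carrier_mat t t" using Ti(1) Tc by auto
    have "adj Ti * adj T = adj (T * Ti)" by (rule adj_mult[symmetric, OF Tc Ti(1)])
    thus "adj Ti * adj T = 1\<^sub>m t" using Ti(2) by simp
  qed
  finally show "mat_range (adj C0) = mat_range (Af ^\<^sub>m k)" unfolding range_Ak[OF nil] .
qed

end

context cep begin

lemma split4: assumes Xc: "X \<in> carrier_mat n n"
  obtains Y B12 B21 B22 where "Y \<in> carrier_mat t t" "B12 \<in> carrier_mat t (n - t)"
    "B21 \<in> carrier_mat (n - t) t" "B22 \<in> carrier_mat (n - t) (n - t)" "X = four_block_mat Y B12 B21 B22"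
proof -
  obtain Y B12 B21 B22 where sb: "split_block X t t = (Y, B12, B21, B22)" by (metis prod_cases4)
  have d: "dim_row X = t + (n - t)" "dim_col X = t + (n - t)" using Xc tn by auto
  from split_block[OF sb d] show ?thesis using that by blast
qed

lemma P0_four: assumes Y: "Y \<in> carrier_mat t t" and B12: "B12 \<in> carrier_mat t (n - t)"
  and B21: "B21 \<in> carrier_mat (n - t) t" and B22: "B22 \<in> carrier_mat (n - t) (n - t)"
  shows "P0 * four_block_mat Y B12 B21 B22 = four_block_mat Y B12 (0\<^sub>m (n - t) t) (0\<^sub>m (n - t) (n - t))"
proof -
  have "P0 * four_block_mat Y B12 B21 B22 = four_block_mat (1\<^sub>m t * Y + 0\<^sub>m t (n - t) * B21) (1\<^sub>m t * B12 + 0\<^sub>m t (n - t) * B22)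
      (0\<^sub>m (n - t) t * Y + 0\<^sub>m (n - t) (n - t) * B21) (0\<^sub>m (n - t) t * B12 + 0\<^sub>m (n - t) (n - t) * B22)"
    unfolding P0_def blk_def
    by (rule mult_four_block_mat[OF one_carrier_mat zero_carrier_mat zero_carrier_mat zero_carrier_mat Y B12 B21 B22])
  also have "\<dots> = four_block_mat Y B12 (0\<^sub>m (n - t) t) (0\<^sub>m (n - t) (n - t))"
    using Y B12 B21 B22 by (simp add: msimps)
  finally show ?thesis .
qed

lemma four_P0: assumes Y: "Y \<in> carrier_mat t t" and B12: "B12 \<in> carrier_mat t (n - t)"
  shows "four_block_mat Y B12 (0\<^sub>m (n - t) t) (0\<^sub>m (n - t) (n - t)) * P0 = blk Y"
proof -
  have "four_block_mat Y B12 (0\<^sub>m (n - t) t) (0\<^sub>m (n - t) (n - t)) * P0 =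
    four_block_mat (Y * 1\<^sub>m t + B12 * 0\<^sub>m (n - t) t) (Y * 0\<^sub>m t (n - t) + B12 * 0\<^sub>m (n - t) (n - t))
      (0\<^sub>m (n - t) t * 1\<^sub>m t + 0\<^sub>m (n - t) (n - t) * 0\<^sub>m (n - t) t) (0\<^sub>m (n - t) t * 0\<^sub>m t (n - t) + 0\<^sub>m (n - t) (n - t) * 0\<^sub>m (n - t) (n - t))"
    unfolding P0_def blk_def
    by (rule mult_four_block_mat[OF Y B12 zero_carrier_mat zero_carrier_mat one_carrier_mat zero_carrier_mat zero_carrier_mat zero_carrier_mat])
  also have "\<dots> = blk Y" unfolding blk_def using Y B12 by (simp add: msimps)
  finally show ?thesis .
qed

lemma blk_four: assumes Y: "Y \<in> carrier_mat t t" and Z11: "Z11 \<in> carrier_mat t t" and Z12: "Z12 \<in> carrier_mat t (n - t)"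
  and Z21: "Z21 \<in> carrier_mat (n - t) t" and Z22: "Z22 \<in> carrier_mat (n - t) (n - t)"
  shows "blk Y * four_block_mat Z11 Z12 Z21 Z22 = four_block_mat (Y * Z11) (Y * Z12) (0\<^sub>m (n - t) t) (0\<^sub>m (n - t) (n - t))"
proof -
  have "blk Y * four_block_mat Z11 Z12 Z21 Z22 = four_block_mat (Y * Z11 + 0\<^sub>m t (n - t) * Z21) (Y * Z12 + 0\<^sub>m t (n - t) * Z22)
      (0\<^sub>m (n - t) t * Z11 + 0\<^sub>m (n - t) (n - t) * Z21) (0\<^sub>m (n - t) t * Z12 + 0\<^sub>m (n - t) (n - t) * Z22)"
    unfolding blk_def
    by (rule mult_four_block_mat[OF Y zero_carrier_mat zero_carrier_mat zero_carrier_mat Z11 Z12 Z21 Z22])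
  also have "\<dots> = four_block_mat (Y * Z11) (Y * Z12) (0\<^sub>m (n - t) t) (0\<^sub>m (n - t) (n - t))"
    using Y Z11 Z12 Z21 Z22 by (simp add: msimps)
  finally show ?thesis .
qed

lemma cep_unique: assumes nil: "N ^\<^sub>m k = 0\<^sub>m (n - t) (n - t)"
  and Xc: "X \<in> carrier_mat n n" and XAX: "X * Af * X = X"
  and R1: "mat_range X = mat_range (Af ^\<^sub>m k)" and R2: "mat_range (adj X) = mat_range (Af ^\<^sub>m k)"
  shows "X = C0"
proof -
  have R: "mat_range (Af ^\<^sub>m k) = mat_range (U * P0)" by (rule range_Ak[OF nil])
  have UP0: "U * P0 \<in> carrier_mat n n" using U P0c by simp
  obtain W1 where W1: "W1 \<in> carrier_mat n n" "X = U * P0 * W1"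
    using range_factor[OF Xc UP0] R1 R by auto
  obtain W2 where W2: "W2 \<in> carrier_mat n n" "adj X = U * P0 * W2"
    using range_factor[OF adj_carrier[OF Xc] UP0] R2 R by auto
  obtain W3 where W3: "W3 \<in> carrier_mat n n" "U * P0 = X * W3"
    using range_factor[OF UP0 Xc] R1 R by auto
  define X' where "X' = adj U * X * U"
  have X'c: "X' \<in> carrier_mat n n" unfolding X'_def using U Xc by simp
  have XX': "X = U * X' * adj U"
  proof -
    have "U * X' * adj U = U * (adj U * (X * (U * adj U)))" unfolding X'_def using U Xc by (simp add: msimps)
    also have "\<dots> = X * (U * adj U)" by (rule cancel_left[OF U(3)], insert U Xc, auto)
    also have "\<dots> = X" using U Xc by (simp add: msimps)
    finally show ?thesis by simp
  qed
  have X'1: "X' = P0 * (W1 * U)"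
  proof -
    have "X' = adj U * (U * (P0 * (W1 * U)))" unfolding X'_def W1(2) using U P0c W1(1) by (simp add: msimps)
    also have "\<dots> = P0 * (W1 * U)" by (rule cancel_left[OF U(4)], insert U P0c, auto)
    finally show ?thesis .
  qed
  have adjX: "X = adj W2 * (P0 * adj U)"
  proof -
    have "X = adj (adj X)" by simp
    also have "\<dots> = adj (U * P0 * W2)" unfolding W2(2) ..
    also have "\<dots> = adj W2 * adj (U * P0)" by (rule adj_mult[OF UP0 W2(1)])
    also have "adj (U * P0) = adj P0 * adj U" by (rule adj_mult[OF U(1) P0c])
    finally show ?thesis unfolding adj_P0 .
  qed
  have X'2: "X' = (adj U * adj W2) * P0"
  proof -
    have "X' = adj U * (adj W2 * (P0 * (adj U * U)))" unfolding X'_def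
      using arg_cong[OF adjX, of "\<lambda>Z. adj U * Z * U"] U W2(1) P0c Xc by (simp add: msimps)
    also have "\<dots> = (adj U * adj W2) * P0" using U W2(1) P0c by (simp add: msimps)
    finally show ?thesis .
  qed
  have PP: "P0 * P0 = P0" using P0_blk(1)[OF one_carrier_mat] unfolding P0_def .
  have PX: "P0 * X' = X'"
  proof -
    have "P0 * X' = (P0 * P0) * (W1 * U)" unfolding X'1 using P0c W1(1) U by (simp add: msimps)
    thus ?thesis unfolding PP X'1[symmetric] .
  qed
  have XP: "X' * P0 = X'"
  proof -
    have "X' * P0 = (adj U * adj W2) * (P0 * P0)" unfolding X'2 using P0c W2(1) U by (simp add: msimps)
    thus ?thesis unfolding PP X'2[symmetric] .
  qed
  obtain Y B12 B21 B22 where Yc: "Y \<in> carrier_mat t t" "B12 \<in> carrier_mat t (n - t)"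
    "B21 \<in> carrier_mat (n - t) t" "B22 \<in> carrier_mat (n - t) (n - t)" and X'4: "X' = four_block_mat Y B12 B21 B22"
    using split4[OF X'c] by blast
  have X'Y: "X' = blk Y"
  proof -
    have "X' = (P0 * X') * P0" using PX XP by simp
    also have "P0 * X' = four_block_mat Y B12 (0\<^sub>m (n - t) t) (0\<^sub>m (n - t) (n - t))"
      unfolding X'4 by (rule P0_four[OF Yc])
    also have "\<dots> * P0 = blk Y" by (rule four_P0[OF Yc(1,2)])
    finally show ?thesis .
  qed
  have YTY: "Y * T * Y = Y"
  proof -
    have "X' * Ap * X' = adj U * (X * Af * X) * U" unfolding X'_def Af_def using U Xc Apc by (simp add: msimps)
    hence e1: "X' * Ap * X' = X'" unfolding XAX X'_def .
    have bY: "blk Y * Ap = four_block_mat (Y * T) (Y * S) (0\<^sub>m (n - t) t) (0\<^sub>m (n - t) (n - t))"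
      unfolding Ap_def by (rule blk_four[OF Yc(1) Tc Sc zero_carrier_mat Nc])
    have YT: "Y * T \<in> carrier_mat t t" "Y * S \<in> carrier_mat t (n - t)" using Yc Tc Sc by auto
    have "blk Y * Ap * blk Y = blk (Y * T * Y)"
    proof -
      have "four_block_mat (Y * T) (Y * S) (0\<^sub>m (n - t) t) (0\<^sub>m (n - t) (n - t)) * blk Y =
        four_block_mat (Y * T * Y + Y * S * 0\<^sub>m (n - t) t) (Y * T * 0\<^sub>m t (n - t) + Y * S * 0\<^sub>m (n - t) (n - t))
        (0\<^sub>m (n - t) t * Y + 0\<^sub>m (n - t) (n - t) * 0\<^sub>m (n - t) t) (0\<^sub>m (n - t) t * 0\<^sub>m t (n - t) + 0\<^sub>m (n - t) (n - t) * 0\<^sub>m (n - t) (n - t))"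
        unfolding blk_def
        by (rule mult_four_block_mat[OF YT(1) YT(2) zero_carrier_mat zero_carrier_mat Yc(1) zero_carrier_mat zero_carrier_mat zero_carrier_mat])
      also have "\<dots> = blk (Y * T * Y)" unfolding blk_def using Yc Tc Sc by (simp add: msimps)
      finally show ?thesis unfolding bY .
    qed
    with e1 have "blk (Y * T * Y) = blk Y" unfolding X'Y by simp
    hence eq: "four_block_mat (Y * T * Y) (0\<^sub>m t (n - t)) (0\<^sub>m (n - t) t) (0\<^sub>m (n - t) (n - t)) =
      four_block_mat Y (0\<^sub>m t (n - t)) (0\<^sub>m (n - t) t) (0\<^sub>m (n - t) (n - t))" unfolding blk_def .
    have c: "Y * T * Y \<in> carrier_mat t t" using Yc Tc by simp
    from four_block_eqD[OF eq c zero_carrier_mat zero_carrier_mat zero_carrier_mat Yc(1) zero_carrier_mat zero_carrier_mat zero_carrier_mat]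
    show ?thesis by simp
  qed
  define Z where "Z = adj U * W3"
  have Zc: "Z \<in> carrier_mat n n" unfolding Z_def using U W3(1) by simp
  obtain Z11 Z12 Z21 Z22 where Zcs: "Z11 \<in> carrier_mat t t" "Z12 \<in> carrier_mat t (n - t)"
    "Z21 \<in> carrier_mat (n - t) t" "Z22 \<in> carrier_mat (n - t) (n - t)" and Z4: "Z = four_block_mat Z11 Z12 Z21 Z22"
    using split4[OF Zc] by blast
  have P0Z: "P0 = X' * Z"
  proof -
    have "P0 = adj U * (U * P0)" by (rule cancel_left[OF U(4), symmetric], insert U P0c, auto)
    also have "\<dots> = adj U * (X * W3)" unfolding W3(2) ..
    also have "\<dots> = adj U * (U * (X' * (adj U * W3)))" unfolding XX' using U X'c W3(1) by (simp add: msimps)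
    also have "\<dots> = X' * (adj U * W3)" by (rule cancel_left[OF U(4)], insert U X'c, auto)
    finally show ?thesis unfolding Z_def .
  qed
  have YZ: "Y * Z11 = 1\<^sub>m t"
  proof -
    have "P0 = four_block_mat (Y * Z11) (Y * Z12) (0\<^sub>m (n - t) t) (0\<^sub>m (n - t) (n - t))"
      unfolding P0Z X'Y Z4 by (rule blk_four[OF Yc(1) Zcs])
    hence eq: "four_block_mat (1\<^sub>m t) (0\<^sub>m t (n - t)) (0\<^sub>m (n - t) t) (0\<^sub>m (n - t) (n - t)) =
      four_block_mat (Y * Z11) (Y * Z12) (0\<^sub>m (n - t) t) (0\<^sub>m (n - t) (n - t))" unfolding P0_def blk_def .
    have c: "Y * Z11 \<in> carrier_mat t t" "Y * Z12 \<in> carrier_mat t (n - t)" using Yc Zcs by auto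
    from four_block_eqD[OF eq one_carrier_mat zero_carrier_mat zero_carrier_mat zero_carrier_mat c zero_carrier_mat zero_carrier_mat]
    show ?thesis by simp
  qed
  have YT1: "Y * T = 1\<^sub>m t"
  proof -
    have "Y * T = (Y * T) * (Y * Z11)" unfolding YZ using Yc Tc by (simp add: msimps)
    also have "\<dots> = (Y * T * Y) * Z11" using Yc Tc Zcs by (simp add: msimps)
    also have "\<dots> = 1\<^sub>m t" unfolding YTY YZ ..
    finally show ?thesis .
  qed
  have YTi: "Y = Ti"
  proof -
    have "Y = Y * (T * Ti)" unfolding Ti(2) using Yc by (simp add: msimps)
    also have "\<dots> = (Y * T) * Ti" using Yc Tc Ti(1) by (simp add: msimps)
    also have "\<dots> = Ti" unfolding YT1 using Ti(1) by (simp add: msimps)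
    finally show ?thesis .
  qed
  show ?thesis unfolding XX' X'Y YTi C0_def ..
qed

lemma core_ep_Af: assumes nil: "N ^\<^sub>m k = 0\<^sub>m (n - t) (n - t)" and k: "k = mat_index Af"
  shows "core_ep_inverse Af = C0"
  unfolding core_ep_inverse_def
proof (rule the_equality)
  show "C0 \<in> carrier_mat (dim_row Af) (dim_row Af) \<and> C0 * Af * C0 = C0 \<and>
    mat_range C0 = mat_range (Af ^\<^sub>m mat_index Af) \<and> mat_range (adj C0) = mat_range (Af ^\<^sub>m mat_index Af)"
    using C0c C0_outer C0_range[OF nil] k by simp
  fix X assume "X \<in> carrier_mat (dim_row Af) (dim_row Af) \<and> X * Af * X = X \<and>
    mat_range X = mat_range (Af ^\<^sub>m mat_index Af) \<and> mat_range (adj X) = mat_range (Af ^\<^sub>m mat_index Af)"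
  with k show "X = C0" using cep_unique[OF nil] by auto
qed

end

lemma uminus_zero_mat[simp]: "- (0\<^sub>m a b :: complex mat) = 0\<^sub>m a b"
  by (rule eq_matI, auto)

context cep begin

lemma proj_Afm: "proj_range (Af ^\<^sub>m m) =
  U * four_block_mat (1\<^sub>m t) (0\<^sub>m t (n - t)) (0\<^sub>m (n - t) t) (proj_range (N ^\<^sub>m m)) * adj U"
proof -
  define K where "K = N ^\<^sub>m m"
  have Kc: "K \<in> carrier_mat (n - t) (n - t)" unfolding K_def using Nc by simp
  define X where "X = mp_inverse K"
  have X: "is_mp K X" unfolding X_def by (rule mp_inverse_is_mp[OF Kc])
  have Xc: "X \<in> carrier_mat (n - t) (n - t)" and KXK: "K * X * K = K" and hKX: "adj (K * X) = K * X"
    using X Kc unfolding is_mp_def by auto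
  define KK where "KK = K * X"
  have KKc: "KK \<in> carrier_mat (n - t) (n - t)" unfolding KK_def using Kc Xc by simp
  have KKp: "proj_range K = KK" unfolding proj_range_def KK_def X_def ..
  define P1 where "P1 = four_block_mat (1\<^sub>m t) (0\<^sub>m t (n - t)) (0\<^sub>m (n - t) t) KK"
  have P1c: "P1 \<in> carrier_mat n n"
  proof -
    have "P1 \<in> carrier_mat (t + (n - t)) (t + (n - t))" unfolding P1_def
      by (rule four_block_carrier_mat[OF one_carrier_mat KKc])
    thus ?thesis by (simp only: tn')
  qed
  have hP1: "adj P1 = P1" unfolding P1_def
    using adj_four_block[OF one_carrier_mat zero_carrier_mat zero_carrier_mat KKc] hKX unfolding KK_def by simp
  have Apm: "Ap ^\<^sub>m m \<in> carrier_mat n n" using Apc by simp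
  define Z1 where "Z1 = four_block_mat (Ti ^\<^sub>m m) (- (Ti ^\<^sub>m m * Sj m * X)) (0\<^sub>m (n - t) t) X"
  have Wc: "- (Ti ^\<^sub>m m * Sj m * X) \<in> carrier_mat t (n - t)" using Ti(1) Sjc[of m] Xc by simp
  have Z1c: "Z1 \<in> carrier_mat n n"
  proof -
    have "Z1 \<in> carrier_mat (t + (n - t)) (t + (n - t))" unfolding Z1_def
      by (rule four_block_carrier_mat[OF pow_carrier_mat[OF Ti(1)] Xc])
    thus ?thesis by (simp only: tn')
  qed
  have P1Ap: "P1 * Ap ^\<^sub>m m = Ap ^\<^sub>m m"
  proof -
    have "P1 * Ap ^\<^sub>m m = four_block_mat (1\<^sub>m t * T ^\<^sub>m m + 0\<^sub>m t (n - t) * 0\<^sub>m (n - t) t) (1\<^sub>m t * Sj m + 0\<^sub>m t (n - t) * K)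
      (0\<^sub>m (n - t) t * T ^\<^sub>m m + KK * 0\<^sub>m (n - t) t) (0\<^sub>m (n - t) t * Sj m + KK * K)"
      unfolding P1_def Ap_pow K_def
      by (rule mult_four_block_mat[OF one_carrier_mat zero_carrier_mat zero_carrier_mat KKc[unfolded K_def]
         pow_carrier_mat[OF Tc] Sjc zero_carrier_mat Kc[unfolded K_def]])
    also have "KK * K = K" unfolding KK_def by (rule KXK)
    also have "four_block_mat (1\<^sub>m t * T ^\<^sub>m m + 0\<^sub>m t (n - t) * 0\<^sub>m (n - t) t) (1\<^sub>m t * Sj m + 0\<^sub>m t (n - t) * K)
      (0\<^sub>m (n - t) t * T ^\<^sub>m m + KK * 0\<^sub>m (n - t) t) (0\<^sub>m (n - t) t * Sj m + K) = Ap ^\<^sub>m m"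
      unfolding Ap_pow K_def using Tc Sjc KKc Kc[unfolded K_def] by (simp add: msimps)
    finally show ?thesis .
  qed
  have ApZ1: "Ap ^\<^sub>m m * Z1 = P1"
  proof -
    have "Ap ^\<^sub>m m * Z1 = four_block_mat (T ^\<^sub>m m * Ti ^\<^sub>m m + Sj m * 0\<^sub>m (n - t) t) (T ^\<^sub>m m * - (Ti ^\<^sub>m m * Sj m * X) + Sj m * X)
      (0\<^sub>m (n - t) t * Ti ^\<^sub>m m + K * 0\<^sub>m (n - t) t) (0\<^sub>m (n - t) t * - (Ti ^\<^sub>m m * Sj m * X) + K * X)"
      unfolding Z1_def Ap_pow K_def
      by (rule mult_four_block_mat[OF pow_carrier_mat[OF Tc] Sjc zero_carrier_mat Kc[unfolded K_def]
         pow_carrier_mat[OF Ti(1)] Wc zero_carrier_mat Xc])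
    also have "T ^\<^sub>m m * - (Ti ^\<^sub>m m * Sj m * X) + Sj m * X = 0\<^sub>m t (n - t)"
    proof -
      have "T ^\<^sub>m m * - (Ti ^\<^sub>m m * Sj m * X) = - (T ^\<^sub>m m * (Ti ^\<^sub>m m * Sj m * X))"
        using Tc Ti(1) Sjc[of m] Xc by (simp add: uminus_mult_right_mat)
      also have "T ^\<^sub>m m * (Ti ^\<^sub>m m * Sj m * X) = (T ^\<^sub>m m * Ti ^\<^sub>m m) * (Sj m * X)"
        using Tc Ti(1) Sjc[of m] Xc by (simp add: msimps)
      also have "\<dots> = Sj m * X" unfolding Tpow(2) using Sjc[of m] Xc by (simp add: msimps)
      finally show ?thesis using Sjc[of m] Xc by simp
    qed
    also have "0\<^sub>m (n - t) t * - (Ti ^\<^sub>m m * Sj m * X) = 0\<^sub>m (n - t) (n - t)" using Wc by simp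
    also have "four_block_mat (T ^\<^sub>m m * Ti ^\<^sub>m m + Sj m * 0\<^sub>m (n - t) t) (0\<^sub>m t (n - t))
      (0\<^sub>m (n - t) t * Ti ^\<^sub>m m + K * 0\<^sub>m (n - t) t) (0\<^sub>m (n - t) (n - t) + K * X) = P1"
      unfolding P1_def KK_def Tpow(2) using Ti(1) Sjc Kc Xc by (simp add: msimps)
    finally show ?thesis .
  qed
  have "proj_range (Af ^\<^sub>m m) = U * P1 * adj U"
  proof (rule proj_range_char)
    show "Af ^\<^sub>m m \<in> carrier_mat n n" using Afc by simp
    show "U * P1 * adj U \<in> carrier_mat n n" using U P1c by simp
    show "adj (U * P1 * adj U) = U * P1 * adj U" unfolding conj_adj[OF Uu P1c] hP1 ..
    show "U * P1 * adj U * Af ^\<^sub>m m = Af ^\<^sub>m m"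
      unfolding Af_pow conj_mult[OF Uu P1c Apm] P1Ap ..
    show "U * Z1 * adj U \<in> carrier_mat n n" using U Z1c by simp
    show "U * P1 * adj U = Af ^\<^sub>m m * (U * Z1 * adj U)"
      unfolding Af_pow conj_mult[OF Uu Apm Z1c] ApZ1 ..
  qed
  thus ?thesis unfolding P1_def KKp[symmetric] K_def .
qed

lemma wg_Af: assumes cep: "core_ep_inverse Af = C0"
  shows "m_weak_group_inverse m Af = U * four_block_mat Ti (Ti ^\<^sub>m (m+1) * Sj m) (0\<^sub>m (n - t) t) (0\<^sub>m (n - t) (n - t)) * adj U"
proof -
  have bTi: "blk Ti \<in> carrier_mat n n" by (rule blk_carrier[OF Ti(1)])
  have Tim: "Ti ^\<^sub>m (m + 1) \<in> carrier_mat t t" using Ti(1) by simp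
  have bTim: "blk (Ti ^\<^sub>m (m + 1)) \<in> carrier_mat n n" by (rule blk_carrier[OF Tim])
  have Apm: "Ap ^\<^sub>m m \<in> carrier_mat n n" using Apc by simp
  have "C0 ^\<^sub>m (m + 1) = U * (blk Ti ^\<^sub>m (m + 1)) * adj U" unfolding C0_def by (rule conj_pow[OF Uu bTi])
  also have "blk Ti ^\<^sub>m (m + 1) = blk (Ti ^\<^sub>m (m + 1))" unfolding blk_def Suc_eq_plus1[symmetric]
    by (rule block_diag_pow[OF Ti(1)])
  finally have C0p: "C0 ^\<^sub>m (m + 1) = U * blk (Ti ^\<^sub>m (m + 1)) * adj U" .
  have "m_weak_group_inverse m Af = U * (blk (Ti ^\<^sub>m (m + 1)) * Ap ^\<^sub>m m) * adj U"
    unfolding m_weak_group_inverse_def cep C0p Af_pow by (rule conj_mult[OF Uu bTim Apm])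
  also have "blk (Ti ^\<^sub>m (m + 1)) * Ap ^\<^sub>m m = four_block_mat (Ti ^\<^sub>m (m + 1) * T ^\<^sub>m m) (Ti ^\<^sub>m (m + 1) * Sj m) (0\<^sub>m (n - t) t) (0\<^sub>m (n - t) (n - t))"
    unfolding Ap_pow by (rule blk_four[OF Tim pow_carrier_mat[OF Tc] Sjc zero_carrier_mat pow_carrier_mat[OF Nc]])
  also have "Ti ^\<^sub>m (m + 1) * T ^\<^sub>m m = Ti"
  proof -
    have "Ti ^\<^sub>m (m + 1) * T ^\<^sub>m m = Ti * (Ti ^\<^sub>m m * T ^\<^sub>m m)"
      unfolding pow_Suc_left[OF Ti(1), of m, unfolded Suc_eq_plus1] using Ti(1) Tc by (simp add: msimps)
    thus ?thesis unfolding Tpow(1) using Ti(1) by (simp add: msimps)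
  qed
  finally show ?thesis .
qed

lemma wc_Af: assumes cep: "core_ep_inverse Af = C0"
  shows "m_weak_core_inverse m Af = U * four_block_mat Ti (Ti ^\<^sub>m (m+1) * Sj m * proj_range (N ^\<^sub>m m))
     (0\<^sub>m (n - t) t) (0\<^sub>m (n - t) (n - t)) * adj U"
proof -
  define KK where "KK = proj_range (N ^\<^sub>m m)"
  have KKc: "KK \<in> carrier_mat (n - t) (n - t)"
  proof -
    have Nm: "N ^\<^sub>m m \<in> carrier_mat (n - t) (n - t)" using Nc by simp
    have "is_mp (N ^\<^sub>m m) (mp_inverse (N ^\<^sub>m m))" by (rule mp_inverse_is_mp[OF Nm])
    hence "mp_inverse (N ^\<^sub>m m) \<in> carrier_mat (dim_col (N ^\<^sub>m m)) (dim_row (N ^\<^sub>m m))" unfolding is_mp_def by simp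
    moreover have "dim_col (N ^\<^sub>m m) = n - t" "dim_row (N ^\<^sub>m m) = n - t" using Nm by auto
    ultimately have Xm: "mp_inverse (N ^\<^sub>m m) \<in> carrier_mat (n - t) (n - t)" by simp
    show ?thesis unfolding KK_def proj_range_def using Nm Xm by (simp add: carrier_matD)
  qed
  define M where "M = Ti ^\<^sub>m (m+1) * Sj m"
  have Mc: "M \<in> carrier_mat t (n - t)" unfolding M_def using Ti(1) Sjc[of m] by simp
  define W where "W = four_block_mat Ti M (0\<^sub>m (n - t) t) (0\<^sub>m (n - t) (n - t))"
  define P1 where "P1 = four_block_mat (1\<^sub>m t) (0\<^sub>m t (n - t)) (0\<^sub>m (n - t) t) KK"
  have Wc: "W \<in> carrier_mat n n"
  proof -
    have "W \<in> carrier_mat (t + (n - t)) (t + (n - t))" unfolding W_def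
      by (rule four_block_carrier_mat[OF Ti(1) zero_carrier_mat])
    thus ?thesis by (simp only: tn')
  qed
  have P1c: "P1 \<in> carrier_mat n n"
  proof -
    have "P1 \<in> carrier_mat (t + (n - t)) (t + (n - t))" unfolding P1_def
      by (rule four_block_carrier_mat[OF one_carrier_mat KKc])
    thus ?thesis by (simp only: tn')
  qed
  have "m_weak_core_inverse m Af = (U * W * adj U) * (U * P1 * adj U)"
    unfolding m_weak_core_inverse_def wg_Af[OF cep] proj_Afm W_def P1_def M_def KK_def ..
  also have "\<dots> = U * (W * P1) * adj U" by (rule conj_mult[OF Uu Wc P1c])
  also have "W * P1 = four_block_mat (Ti * 1\<^sub>m t + M * 0\<^sub>m (n - t) t) (Ti * 0\<^sub>m t (n - t) + M * KK)
      (0\<^sub>m (n - t) t * 1\<^sub>m t + 0\<^sub>m (n - t) (n - t) * 0\<^sub>m (n - t) t) (0\<^sub>m (n - t) t * 0\<^sub>m t (n - t) + 0\<^sub>m (n - t) (n - t) * KK)"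
    unfolding W_def P1_def
    by (rule mult_four_block_mat[OF Ti(1) Mc zero_carrier_mat zero_carrier_mat one_carrier_mat zero_carrier_mat zero_carrier_mat KKc])
  also have "\<dots> = four_block_mat Ti (M * KK) (0\<^sub>m (n - t) t) (0\<^sub>m (n - t) (n - t))"
    using Ti(1) Mc KKc by (simp add: msimps)
  finally show ?thesis unfolding M_def KK_def .
qed

end

theorem theorem4p6:
  fixes A U T S N :: "complex mat" and n t k m :: nat
  assumes A: "A \<in> carrier_mat n n"
    and k: "k = mat_index A"
    and t: "t = crank (A ^\<^sub>m k)"
    and U: "unitary_mat n U"
    and T: "T \<in> carrier_mat t t" "invertible_mat T"
    and S: "S \<in> carrier_mat t (n - t)"
    and N: "N \<in> carrier_mat (n - t) (n - t)" "nil_index N = k"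
    and dec: "A = U * four_block_mat T S (0\<^sub>m (n - t) t) N * adj U"
    and m: "m \<ge> 1"
  shows "m_weak_core_inverse m A =
    U * four_block_mat (inv_mat T)
          ((inv_mat T) ^\<^sub>m (m+1) *
             mat_sum t (n - t) (\<lambda>i. T ^\<^sub>m i * S * N ^\<^sub>m (m - 1 - i)) [0..<m] * proj_range (N ^\<^sub>m m))
          (0\<^sub>m (n - t) t) (0\<^sub>m (n - t) (n - t)) * adj U"
proof -
  have Ak: "A ^\<^sub>m k \<in> carrier_mat n n" using A by simp
  have dA: "dim_row A = n" using A by simp
  have tn: "t \<le> n" unfolding t crank_def using vec_space.rank_le_nc[OF Ak] dA by simp
  interpret cep n t T S N U by (unfold_locales, insert tn T S N(1) U, auto)
  have AAf: "A = Af" unfolding dec Af_def Ap_def ..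
  have nil: "N ^\<^sub>m k = 0\<^sub>m (n - t) (n - t)" by (rule N_nil, insert t AAf, simp)
  have cep: "core_ep_inverse Af = C0" by (rule core_ep_Af[OF nil], insert k AAf, simp)
  show ?thesis unfolding AAf wc_Af[OF cep] Ti_def Sj_def ..
qed

end
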